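(* Suppose Assumptions 1–4 hold, the algorithm below is run with $\tau_1$ as specified, and let $\delta\in(0,1)$. On the event $\mathcal{E}=\mathcal{E}_w\cap\mathcal{E}_{\tilde w}\cap\mathcal{E}_\Theta\cap\mathcal{E}_z$ defined below, for every $i\in[n_e]$ and $j\in[p]$ it holds that $\|\hat\Theta_{\mathcal{G}_j}(i)-\Theta_{\mathcal{G}_j}\|\le\sqrt{\varepsilon_0^2/i}$, where $\Theta_{\mathcal{G}_j}=[A\ B_{\mathcal{G}_j}]$.
   Context: Setting. In each round $t\in[T]$ the system evolves for $k=0,\dots,N-1$ as $x^{(t)}_{k+1}=Ax^{(t)}_k+B_{\mathcal{S}_t}u^{(t)}_{k,\mathcal{S}_t}+w^{(t)}_k$, $x^{(t)}_0=0$, with unknown $A\in\mathbb{R}^{n\times n}$, $B=[B_1\ \cdots\ B_q]\in\mathbb{R}^{n\times m}$, $B_i\in\mathbb{R}^{n\times m_i}$, actuators $\mathcal{G}=\{1,\dots,q\}$, $B_{\mathcal{S}}$ the columns for $\mathcal{S}$, $m_{\mathcal{S}}=\sum_{i\in\mathcal{S}}m_i$, $H\ge1$ actuators per round. Cost matrices $Q^{(t)},Q_f^{(t)}\in\mathbb{S}^n_+$, $R^{(t)}\in\mathbb{S}^m_{++}$, $R^{(t)}_{\mathcal{S}}$ the principal submatrix for $\mathcal{S}$. Riccati recursion: $P^{(t)}_{N,\mathcal{S}}=Q_f^{(t)}$, $K^{(t)}_{k,\mathcal{S}}=-(B_{\mathcal{S}}^\top P^{(t)}_{k+1,\mathcal{S}}B_{\mathcal{S}}+R^{(t)}_{\mathcal{S}})^{-1}B_{\mathcal{S}}^\top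 P^{(t)}_{k+1,\mathcal{S}}A$, $P^{(t)}_{k,\mathcal{S}}=Q^{(t)}+A^\top P^{(t)}_{k+1,\mathcal{S}}(A+B_{\mathcal{S}}K^{(t)}_{k,\mathcal{S}})$; $\hat K$ the same with $(A,B_{\mathcal{S}})$ replaced by estimates. $\Psi^{(t)}_{k_2,k_1}(\mathcal{S})=(A+B_{\mathcal{S}}K^{(t)}_{k_2-1,\mathcal{S}})\cdots(A+B_{\mathcal{S}}K^{(t)}_{k_1,\mathcal{S}})$ ($I$ if $k_2=k_1$). $\Gamma^{(t)}_{k,\mathcal{S}}=\max\{\|A\|,\|B\|,\|P^{(t)}_{k,\mathcal{S}}\|,\|K^{(t)}_{k-1,\mathcal{S}}\|\}$, $\Gamma_{\mathcal{S}}=\max_{t,k\in[N]}\Gamma^{(t)}_{k,\mathcal{S}}$, $\tilde\Gamma_{\mathcal{S}}=1+\Gamma_{\mathcal{S}}$, $\sigma_Q=\max\{\max_t\sigma_1(Q^{(t)}),\max_t\sigma_1(Q_f^{(t)})\}$, $\sigma_R=\max_t\sigma_1(R^{(t)})$, $\vartheta=\max\{\|A\|,\|B\|\}$; for $|\mathcal{S}|=H$, $\zeta_{\mathcal{S}}\ge1,\eta_{\mathcal{S}}\in(0,1)$ satisfy $\|\Psi^{(t)}_{k_2,k_1}(\mathcal{S})\|\le\zeta_{\mathcal{S}}\eta_{\mathcal{S}}^{k_2-k_1}$ for all $t$, $k_1\le k_2$; $\mu_{\mathcal{S}}=32\ell^{5/2}\beta^{2(\ell-1)}(1+\nu^{-1})\tilde\Gamma_{\mathcal{S}}^3\max\{\sigma_Q,\sigma_R\}$,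 $\varepsilon_0=\min_{|\mathcal{S}|=H}\frac{1-\eta_{\mathcal{S}}}{6\|B_{\mathcal{S}}\|\zeta_{\mathcal{S}}}\tilde\Gamma_{\mathcal{S}}^{-3}(20\tilde\Gamma_{\mathcal{S}}^9\sigma_R)^{1-\ell}\mu_{\mathcal{S}}^{-1}$ with $\beta=\max\{1,\varepsilon_0+\|A\|\}$. Assumptions: (1) $Q_f^{(t)}\succ0$, $\sigma_n(Q^{(t)})\ge1$, $\sigma_m(R^{(t)})\ge1$ for all $t$. (2) There are $\ell\in\{1,\dots,n-1\}$, $\nu>0$ with $\sigma_n([B_{\mathcal{S}}\ AB_{\mathcal{S}}\ \cdots\ A^{\ell-1}B_{\mathcal{S}}])\ge\nu$ for all $|\mathcal{S}|=H$. (3) The $w^{(t)}_k$ are independent across $k,t$, each $\mathcal{N}(0,\sigma^2I_n)$. (4) Partition $\mathcal{G}=\bigcup_{j=1}^p\mathcal{G}_j$, $|\mathcal{G}_j|\le H$, with known $K_{\mathcal{G}_j}$ satisfying $\|(A+B_{\mathcal{G}_j}K_{\mathcal{G}_j})^k\|\le\zeta_0\eta_0^k$ for all $k\ge0$, $\zeta_0\ge1$, $\eta_0\in(0,1)$; $\kappa=\max\{\max_j\|K_{\mathcal{G}_j}\|,1\}$. Algorithm (with $\lambda>0$): $\tau_1=\lceil160n(\frac{\lambda\vartheta^2n}{\sigma^2}+2(n+m)\log(\frac{8n}{\delta}(p+\frac{NTz_b}{\lambda})))/((N-1)\varepsilon_0^2)\rceil$ with $z_b=\frac{20\zeta_0^2(1+\kappa)^2\sigma^2}{(1-\eta_0)^2}(2(\vartheta^2+1)\kappa^2m+n)\log\frac{8NT}{\delta}$;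 $n_e=\lceil\sqrt T/(\tau_1p)\rceil$, $\tau_2=(T-n_e\tau_1p)/n_e$ (assumed integer), $T_{1,1}=1$, $T_{i,j+1}=T_{i,j}+\tau_1$, $T_{i+1,1}=T_{i,p+1}+\tau_2$. In epoch $i$, for $j\in[p]$ and $t\in\{T_{i,j},\dots,T_{i,j+1}-1\}$: $\mathcal{S}_t=\mathcal{G}_j$, $u^{(t)}_{k,\mathcal{G}_j}=K_{\mathcal{G}_j}x^{(t)}_k+\tilde w^{(t)}_k$ with $\tilde w^{(t)}_k$ i.i.d. $\mathcal{N}(0,2\sigma^2\kappa^2I)$; then $\hat\Theta_{\mathcal{G}_j}(i)\in\arg\min_Y\{\lambda\|Y\|_F^2+\sum_{l=1}^i\sum_{t=T_{l,j}}^{T_{l,j+1}-1}\sum_{k=0}^{N-1}\|x^{(t)}_{k+1}-Yz^{(t)}_{k,\mathcal{G}_j}\|^2\}$ with $z^{(t)}_{k,\mathcal{G}_j}=[x^{(t)\top}_k\ u^{(t)\top}_{k,\mathcal{G}_j}]^\top$; in the remaining rounds of the epoch, $\mathcal{S}_t$ is chosen by Exp3.S and $u^{(t)}_{k,\mathcal{S}_t}=\hat K^{(t)}_{k,\mathcal{S}_t}x^{(t)}_k$ from the current estimates. Events: with $\tilde{\mathcal{T}}$ the set of estimation rounds $\{t:T_{i,j}\le t\le T_{i,j+1}-1\}$, $\Delta_{\mathcal{G}_j}(i)=\Theta_{\mathcal{G}_j}-\hat\Theta_{\mathcal{G}_j}(i)$, $V_{\mathcal{G}_j}(i)=\lambda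 I+\sum_{l=1}^i\sum_{t=T_{l,j}}^{T_{l,j+1}-1}\sum_{k=0}^{N-1}z^{(t)}_{k,\mathcal{G}_j}z^{(t)\top}_{k,\mathcal{G}_j}$: $\mathcal{E}_w=\{\|w^{(t)}_k\|\le\sigma\sqrt{5n\log(8NT/\delta)}\ \forall t,k\}$; $\mathcal{E}_{\tilde w}=\{\|\tilde w^{(t)}_k\|\le\kappa\sigma\sqrt{10m\log(8NT/\delta)}\ \forall t\in\tilde{\mathcal{T}},k\}$; $\mathcal{E}_\Theta=\{\mathrm{Tr}(\Delta_{\mathcal{G}_j}(i)^\top V_{\mathcal{G}_j}(i)\Delta_{\mathcal{G}_j}(i))\le4\sigma^2n\log\frac{8np\det V_{\mathcal{G}_j}(i)}{\delta\det(\lambda I)}+2\lambda\|\Theta_{\mathcal{G}_j}\|_F^2\ \forall i,j\}$; $\mathcal{E}_z=\{V_{\mathcal{G}_j}(i)-\lambda I\succeq\frac{(N-1)\tau_1i\sigma^2}{80}I\ \forall i,j\}$. *)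

theory Defs
  imports "Jordan_Normal_Form.Matrix" "Jordan_Normal_Form.Determinant"
    "Jordan_Normal_Form.DL_Submatrix" "Jordan_Normal_Form.Gauss_Jordan_Elimination"
    "HOL.Transcendental"
begin

definition vnorm :: "real vec \<Rightarrow> real" where
  "vnorm v = sqrt (v \<bullet> v)"

definition opnorm :: "real mat \<Rightarrow> real" where
  "opnorm M = Sup {vnorm (M *\<^sub>v x) | x. x \<in> carrier_vec (dim_col M) \<and> vnorm x \<le> 1}"

definition fro :: "real mat \<Rightarrow> real" where
  "fro M = sqrt (\<Sum>i<dim_row M. \<Sum>j<dim_col M. (M $$ (i,j))\<^sup>2)"

definition mtrace :: "real mat \<Rightarrow> real" where
  "mtrace M = (\<Sum>i<dim_row M. M $$ (i,i))"

text \<open>Smallest singular value sigma_d of a d x c matrix (d = number of rows):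
  the minimum of |M^T x| over unit vectors x (this is zero when c < d).\<close>
definition svmin :: "real mat \<Rightarrow> real" where
  "svmin M = Inf {vnorm (transpose_mat M *\<^sub>v x) | x. x \<in> carrier_vec (dim_row M) \<and> vnorm x = 1}"

definition psd :: "nat \<Rightarrow> real mat \<Rightarrow> bool" where
  "psd d M \<longleftrightarrow> M \<in> carrier_mat d d \<and> transpose_mat M = M \<and>
     (\<forall>x \<in> carrier_vec d. x \<bullet> (M *\<^sub>v x) \<ge> 0)"

definition pd :: "nat \<Rightarrow> real mat \<Rightarrow> bool" where
  "pd d M \<longleftrightarrow> M \<in> carrier_mat d d \<and> transpose_mat M = M \<and>
     (\<forall>x \<in> carrier_vec d. x \<noteq> 0\<^sub>v d \<longrightarrow> x \<bullet> (M *\<^sub>v x) > 0)"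

definition loewner_ge :: "nat \<Rightarrow> real mat \<Rightarrow> real mat \<Rightarrow> bool" where
  "loewner_ge d M N \<longleftrightarrow> M \<in> carrier_mat d d \<and> N \<in> carrier_mat d d \<and>
     (\<forall>x \<in> carrier_vec d. x \<bullet> ((M - N) *\<^sub>v x) \<ge> 0)"

definition minv :: "real mat \<Rightarrow> real mat" where
  "minv M = the (mat_inverse M)"

definition hcat :: "real mat \<Rightarrow> real mat \<Rightarrow> real mat" where
  "hcat A B = mat (dim_row A) (dim_col A + dim_col B)
     (\<lambda>(i,j). if j < dim_col A then A $$ (i,j) else B $$ (i, j - dim_col A))"

fun ctrb :: "real mat \<Rightarrow> real mat \<Rightarrow> nat \<Rightarrow> real mat" where
  "ctrb A B 0 = 0\<^sub>m (dim_row B) 0"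
| "ctrb A B (Suc l) = hcat (ctrb A B l) ((A ^\<^sub>m l) * B)"

text \<open>Actuator i (1 \<le> i \<le> q) owns the m_i consecutive columns starting at offset
  m_1 + ... + m_(i-1) (0-based) of B = [B_1 ... B_q].\<close>
definition act_off :: "(nat \<Rightarrow> nat) \<Rightarrow> nat \<Rightarrow> nat" where
  "act_off mi i = (\<Sum>k\<in>{1..<i}. mi k)"

definition act_cols :: "(nat \<Rightarrow> nat) \<Rightarrow> nat set \<Rightarrow> nat set" where
  "act_cols mi S = {c. \<exists>i\<in>S. act_off mi i \<le> c \<and> c < act_off mi i + mi i}"

definition mS :: "(nat \<Rightarrow> nat) \<Rightarrow> nat set \<Rightarrow> nat" where
  "mS mi S = (\<Sum>i\<in>S. mi i)"

definition BS :: "(nat \<Rightarrow> nat) \<Rightarrow> real mat \<Rightarrow> nat set \<Rightarrow> real mat" where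
  "BS mi B S = submatrix B UNIV (act_cols mi S)"

definition RS :: "(nat \<Rightarrow> nat) \<Rightarrow> real mat \<Rightarrow> nat set \<Rightarrow> real mat" where
  "RS mi R S = submatrix R (act_cols mi S) (act_cols mi S)"

definition Kgain :: "real mat \<Rightarrow> real mat \<Rightarrow> real mat \<Rightarrow> real mat \<Rightarrow> real mat" where
  "Kgain A B R P = - (minv (transpose_mat B * P * B + R) * transpose_mat B * P * A)"

text \<open>riccP A B Q Qf R r = P_(N-r): the Riccati matrix with r steps to go.\<close>
fun riccP :: "real mat \<Rightarrow> real mat \<Rightarrow> real mat \<Rightarrow> real mat \<Rightarrow> real mat \<Rightarrow> nat \<Rightarrow> real mat" where
  "riccP A B Q Qf R 0 = Qf"
| "riccP A B Q Qf R (Suc r) =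
     (let P = riccP A B Q Qf R r in Q + transpose_mat A * P * (A + B * Kgain A B R P))"

definition Pk :: "(nat \<Rightarrow> nat) \<Rightarrow> real mat \<Rightarrow> real mat \<Rightarrow> nat set \<Rightarrow> real mat \<Rightarrow> real mat \<Rightarrow> real mat
    \<Rightarrow> nat \<Rightarrow> nat \<Rightarrow> real mat" where
  "Pk mi A B S Q Qf R N k = riccP A (BS mi B S) Q Qf (RS mi R S) (N - k)"

definition Kk :: "(nat \<Rightarrow> nat) \<Rightarrow> real mat \<Rightarrow> real mat \<Rightarrow> nat set \<Rightarrow> real mat \<Rightarrow> real mat \<Rightarrow> real mat
    \<Rightarrow> nat \<Rightarrow> nat \<Rightarrow> real mat" where
  "Kk mi A B S Q Qf R N k = Kgain A (BS mi B S) (RS mi R S) (Pk mi A B S Q Qf R N (Suc k))"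

text \<open>psi d F k1 k2 = F (k2-1) * ... * F k1  (identity if k2 \<le> k1).\<close>
fun psi :: "nat \<Rightarrow> (nat \<Rightarrow> real mat) \<Rightarrow> nat \<Rightarrow> nat \<Rightarrow> real mat" where
  "psi d F k1 0 = 1\<^sub>m d"
| "psi d F k1 (Suc k) = (if Suc k \<le> k1 then 1\<^sub>m d else F k * psi d F k1 k)"

definition GammaS :: "(nat \<Rightarrow> nat) \<Rightarrow> real mat \<Rightarrow> real mat \<Rightarrow> (nat \<Rightarrow> real mat) \<Rightarrow> (nat \<Rightarrow> real mat)
    \<Rightarrow> (nat \<Rightarrow> real mat) \<Rightarrow> nat \<Rightarrow> nat \<Rightarrow> nat set \<Rightarrow> real" where
  "GammaS mi A B Q Qf R N T S = Max {max (max (opnorm A) (opnorm B))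
        (max (opnorm (Pk mi A B S (Q t) (Qf t) (R t) N k))
             (opnorm (Kk mi A B S (Q t) (Qf t) (R t) N (k - 1)))) | t k. t \<in> {1..T} \<and> k \<in> {1..N}}"

end

theory Submission
  imports Defs
begin

lemma sprod_self: "(v::real vec) \<bullet> v = (\<Sum>i<dim_vec v. (v$i)^2)"
  unfolding scalar_prod_def by (simp add: power2_eq_square atLeast0LessThan)

lemma sprod_self_nonneg: "(v::real vec) \<bullet> v \<ge> 0"
proof -
  have "(\<Sum>i<dim_vec v. (v$i)^2) \<ge> 0" by (rule ordered_comm_monoid_add_class.sum_nonneg) simp
  thus ?thesis using sprod_self[of v] by linarith
qed

lemma vnorm_nonneg: "vnorm v \<ge> 0" unfolding vnorm_def by (rule real_sqrt_ge_zero, rule sprod_self_nonneg)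

lemma vnorm_sq: "(vnorm v)^2 = v \<bullet> v"
  unfolding vnorm_def by (rule real_sqrt_pow2, rule sprod_self_nonneg)

lemma cs_sum: fixes u v :: "nat \<Rightarrow> real"
  shows "(\<Sum>i\<in>I. u i * v i)^2 \<le> (\<Sum>i\<in>I. (u i)^2) * (\<Sum>i\<in>I. (v i)^2)"
proof (cases "(\<Sum>i\<in>I. (v i)^2) = 0")
  case True
  show ?thesis
  proof (cases "finite I")
    case fin: True
    have "\<forall>i\<in>I. (v i)^2 = 0" using True fin by (simp add: sum_nonneg_eq_0_iff)
    hence "\<forall>i\<in>I. v i = 0" by simp
    thus ?thesis by simp
  next
    case False thus ?thesis by simp
  qed
next
  case False
  define a where "a = (\<Sum>i\<in>I. (u i)^2)"
  define b where "b = (\<Sum>i\<in>I. u i * v i)"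
  define c where "c = (\<Sum>i\<in>I. (v i)^2)"
  have c0: "c > 0" using False unfolding c_def by (metis less_eq_real_def sum_nonneg zero_le_power2)
  define t where "t = b / c"
  have "0 \<le> (\<Sum>i\<in>I. (u i - t * v i)^2)" by (simp add: ordered_comm_monoid_add_class.sum_nonneg)
  also have "\<dots> = (\<Sum>i\<in>I. (u i)^2 - 2 * t * (u i * v i) + t^2 * (v i)^2)"
    by (rule sum.cong, simp, simp add: power2_diff power_mult_distrib)
  also have "\<dots> = a - 2 * t * b + t^2 * c"
    unfolding a_def b_def c_def
    by (simp add: sum.distrib sum_subtractf sum_distrib_left)
  also have "\<dots> = a - b^2 / c" unfolding t_def using c0 by (simp add: field_simps power2_eq_square)
  finally have "b^2 / c \<le> a" by simp
  hence "b^2 \<le> a * c" using c0 by (simp add: field_simps)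
  thus ?thesis unfolding a_def b_def c_def .
qed

lemma cs_vec: fixes u v :: "real vec" assumes "dim_vec u = dim_vec v"
  shows "(u \<bullet> v)^2 \<le> (u \<bullet> u) * (v \<bullet> v)"
  using cs_sum[of "\<lambda>i. u$i" "\<lambda>i. v$i" "{..<dim_vec v}"] assms unfolding scalar_prod_def
  by (simp add: atLeast0LessThan power2_eq_square)

lemma cs_vnorm: fixes u v :: "real vec" assumes "dim_vec u = dim_vec v"
  shows "\<bar>u \<bullet> v\<bar> \<le> vnorm u * vnorm v"
proof -
  have "(u \<bullet> v)^2 \<le> (vnorm u * vnorm v)^2"
    using cs_vec[OF assms] by (simp add: power_mult_distrib vnorm_sq)
  moreover have "vnorm u * vnorm v \<ge> 0" using vnorm_nonneg by simp
  ultimately show ?thesis using abs_le_square_iff by (metis abs_of_nonneg)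
qed

lemma vnorm_alt: "vnorm v = sqrt (\<Sum>i<dim_vec v. (v$i)^2)"
  unfolding vnorm_def using sprod_self[of v] by simp

lemma vnorm_add: assumes "u \<in> carrier_vec n" "v \<in> carrier_vec n"
  shows "vnorm (u + v) \<le> vnorm u + vnorm v"
proof -
  have "(u + v) \<bullet> (u + v) = u \<bullet> u + 2 * (u \<bullet> v) + v \<bullet> v"
    using assms by (simp add: add_scalar_prod_distrib[of _ n] scalar_prod_add_distrib[of _ n] comm_scalar_prod[of v n u])
  also have "\<dots> \<le> (vnorm u)^2 + 2 * (vnorm u * vnorm v) + (vnorm v)^2"
    using cs_vnorm[of u v] assms by (simp add: vnorm_sq)
  also have "\<dots> = (vnorm u + vnorm v)^2" by (simp add: power2_sum)
  finally have "(vnorm (u+v))^2 \<le> (vnorm u + vnorm v)^2" by (simp add: vnorm_sq)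
  thus ?thesis using vnorm_nonneg[of u] vnorm_nonneg[of v] by (simp add: power2_le_iff_abs_le)
qed

lemma vnorm_smult: "vnorm (c \<cdot>\<^sub>v v) = \<bar>c\<bar> * vnorm v"
proof -
  have "(\<Sum>i<dim_vec v. ((c \<cdot>\<^sub>v v)$i)^2) = c^2 * (\<Sum>i<dim_vec v. (v$i)^2)"
    by (simp add: sum_distrib_left power_mult_distrib)
  thus ?thesis unfolding vnorm_alt by (simp add: real_sqrt_mult)
qed

lemma vnorm_zero[simp]: "vnorm (0\<^sub>v n) = 0" unfolding vnorm_alt by simp

lemma sum_split_add: "(\<Sum>i<a+b. f i) = (\<Sum>i<a. f i) + (\<Sum>i<b. f (a+i::nat))"
  by (induction b) (auto simp: add.assoc)

lemma vnorm_append_sq: "(vnorm (x @\<^sub>v u))^2 = (vnorm x)^2 + (vnorm u)^2"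
proof -
  have "(\<Sum>i<dim_vec x + dim_vec u. ((x @\<^sub>v u)$i)^2)
     = (\<Sum>i<dim_vec x. ((x @\<^sub>v u)$i)^2) + (\<Sum>i<dim_vec u. ((x @\<^sub>v u)$(dim_vec x + i))^2)"
    by (rule sum_split_add)
  also have "\<dots> = (\<Sum>i<dim_vec x. (x$i)^2) + (\<Sum>i<dim_vec u. (u$i)^2)" by simp
  finally show ?thesis unfolding vnorm_sq[symmetric] sprod_self by (simp add: vnorm_sq sprod_self)
qed

lemma vnorm_ge_comp: "i < dim_vec v \<Longrightarrow> \<bar>v$i\<bar> \<le> vnorm v"
proof -
  assume i: "i < dim_vec v"
  have "(v$i)^2 \<le> (\<Sum>j<dim_vec v. (v$j)^2)"
    using i by (intro member_le_sum) auto
  thus ?thesis unfolding vnorm_alt by (simp add: real_le_rsqrt)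
qed

lemma mult_vec_sq: "(vnorm (M *\<^sub>v x))^2 = (\<Sum>i<dim_row M. (row M i \<bullet> x)^2)"
  unfolding vnorm_sq sprod_self by simp

lemma fro_sq: "(fro M)^2 = (\<Sum>i<dim_row M. (vnorm (row M i))^2)"
proof -
  have "(fro M)^2 = (\<Sum>i<dim_row M. \<Sum>j<dim_col M. (M $$ (i,j))\<^sup>2)"
    unfolding fro_def by (intro real_sqrt_pow2 ordered_comm_monoid_add_class.sum_nonneg) simp
  also have "\<dots> = (\<Sum>i<dim_row M. (vnorm (row M i))^2)"
    by (rule sum.cong, simp, simp add: vnorm_sq sprod_self)
  finally show ?thesis .
qed

lemma fro_nonneg: "fro M \<ge> 0" unfolding fro_def by (intro real_sqrt_ge_zero ordered_comm_monoid_add_class.sum_nonneg) simp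

lemma mult_vec_le_fro: assumes "x \<in> carrier_vec (dim_col M)"
  shows "vnorm (M *\<^sub>v x) \<le> fro M * vnorm x"
proof -
  have "(vnorm (M *\<^sub>v x))^2 = (\<Sum>i<dim_row M. (row M i \<bullet> x)^2)" by (rule mult_vec_sq)
  also have "\<dots> \<le> (\<Sum>i<dim_row M. (vnorm (row M i))^2 * (vnorm x)^2)"
  proof (rule sum_mono)
    fix i assume "i \<in> {..<dim_row M}"
    have "\<bar>row M i \<bullet> x\<bar> \<le> vnorm (row M i) * vnorm x" using assms by (intro cs_vnorm) auto
    hence "(row M i \<bullet> x)^2 \<le> (vnorm (row M i) * vnorm x)^2"
      by (meson abs_ge_zero order_trans power2_le_iff_abs_le vnorm_nonneg mult_nonneg_nonneg)
    thus "(row M i \<bullet> x)^2 \<le> (vnorm (row M i))^2 * (vnorm x)^2" by (simp add: power_mult_distrib)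
  qed
  also have "\<dots> = (fro M * vnorm x)^2" by (simp add: fro_sq sum_distrib_right power_mult_distrib)
  finally show ?thesis using fro_nonneg vnorm_nonneg
    by (meson mult_nonneg_nonneg power2_le_imp_le)
qed

definition opset :: "real mat \<Rightarrow> real set" where
  "opset M = {vnorm (M *\<^sub>v x) | x. x \<in> carrier_vec (dim_col M) \<and> vnorm x \<le> 1}"

lemma opnorm_opset: "opnorm M = Sup (opset M)" unfolding opnorm_def opset_def by simp

lemma opset_bdd: "bdd_above (opset M)"
proof (rule bdd_aboveI)
  fix y assume "y \<in> opset M"
  then obtain x where x: "x \<in> carrier_vec (dim_col M)" "vnorm x \<le> 1" "y = vnorm (M *\<^sub>v x)"
    unfolding opset_def by auto
  have "y \<le> fro M * vnorm x" using mult_vec_le_fro[OF x(1)] x(3) by simp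
  also have "\<dots> \<le> fro M" using x(2) fro_nonneg by (simp add: mult_left_le)
  finally show "y \<le> fro M" .
qed

lemma opset_ne: "0 \<in> opset M"
  unfolding opset_def by (rule CollectI, rule exI[of _ "0\<^sub>v (dim_col M)"]) (auto simp: vnorm_alt)

lemma opnorm_upper: "x \<in> carrier_vec (dim_col M) \<Longrightarrow> vnorm x \<le> 1 \<Longrightarrow> vnorm (M *\<^sub>v x) \<le> opnorm M"
  unfolding opnorm_opset by (rule cSup_upper[OF _ opset_bdd]) (auto simp: opset_def)

lemma opnorm_nonneg: "opnorm M \<ge> 0"
  unfolding opnorm_opset by (rule cSup_upper[OF opset_ne opset_bdd])

lemma opnorm_least: "(\<And>x. x \<in> carrier_vec (dim_col M) \<Longrightarrow> vnorm x \<le> 1 \<Longrightarrow> vnorm (M *\<^sub>v x) \<le> K)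
   \<Longrightarrow> opnorm M \<le> K"
  unfolding opnorm_opset by (rule cSup_least) (use opset_ne in \<open>auto simp: opset_def\<close>)

lemma opnorm_bound: assumes x: "x \<in> carrier_vec (dim_col M)"
  shows "vnorm (M *\<^sub>v x) \<le> opnorm M * vnorm x"
proof (cases "vnorm x = 0")
  case True
  have "vnorm (M *\<^sub>v x) \<le> fro M * vnorm x" by (rule mult_vec_le_fro[OF x])
  with True vnorm_nonneg show ?thesis by (metis mult_zero_right order_antisym)
next
  case False
  hence pos: "vnorm x > 0" using vnorm_nonneg[of x] by simp
  define y where "y = (1 / vnorm x) \<cdot>\<^sub>v x"
  have y: "y \<in> carrier_vec (dim_col M)" using x unfolding y_def by simp
  have ny: "vnorm y = 1" unfolding y_def vnorm_smult using pos by simp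
  have "M *\<^sub>v y = (1 / vnorm x) \<cdot>\<^sub>v (M *\<^sub>v x)" unfolding y_def using x
    by (intro mult_mat_vec[of M "dim_row M" "dim_col M"]) auto
  hence "vnorm (M *\<^sub>v y) = vnorm (M *\<^sub>v x) / vnorm x" using pos by (simp add: vnorm_smult)
  moreover have "vnorm (M *\<^sub>v y) \<le> opnorm M" by (rule opnorm_upper[OF y]) (simp add: ny)
  ultimately have "vnorm (M *\<^sub>v x) = vnorm x * vnorm (M *\<^sub>v y)" using pos by (simp add: field_simps)
  also have "\<dots> \<le> vnorm x * opnorm M" using \<open>vnorm (M *\<^sub>v y) \<le> opnorm M\<close> pos by (intro mult_left_mono) auto
  finally show ?thesis by (simp add: mult.commute)
qed

lemma row_le_opnorm: assumes i: "i < dim_row M" shows "vnorm (row M i) \<le> opnorm M"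
proof -
  let ?r = "row M i"
  have r: "?r \<in> carrier_vec (dim_col M)" by simp
  have "(vnorm ?r)^2 = ?r \<bullet> ?r" by (rule vnorm_sq)
  also have "\<dots> = (M *\<^sub>v ?r) $ i" using i by simp
  also have "\<dots> \<le> vnorm (M *\<^sub>v ?r)" using vnorm_ge_comp[of i "M *\<^sub>v ?r"] i by simp
  also have "\<dots> \<le> opnorm M * vnorm ?r" by (rule opnorm_bound[OF r])
  finally have "vnorm ?r * vnorm ?r \<le> opnorm M * vnorm ?r" by (simp add: power2_eq_square)
  thus ?thesis using vnorm_nonneg[of ?r] opnorm_nonneg[of M]
    by (metis mult_le_cancel_right less_eq_real_def mult_zero_right order_trans)
qed

lemma fro_le_opnorm: "(fro M)^2 \<le> dim_row M * (opnorm M)^2"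
proof -
  have "(fro M)^2 = (\<Sum>i<dim_row M. (vnorm (row M i))^2)" by (rule fro_sq)
  also have "\<dots> \<le> (\<Sum>i<dim_row M. (opnorm M)^2)"
    by (rule sum_mono) (simp add: power_mono row_le_opnorm vnorm_nonneg)
  finally show ?thesis by simp
qed

lemma opnorm_le_fro: "opnorm M \<le> fro M"
  by (rule opnorm_least) (metis fro_nonneg mult_left_le mult_vec_le_fro order_trans)

lemma qf_sum: assumes V: "V \<in> carrier_mat D D" and x: "x \<in> carrier_vec D"
  shows "x \<bullet> (V *\<^sub>v x) = (\<Sum>a<D. \<Sum>b<D. x$a * V$$(a,b) * x$b)"
proof -
  have "x \<bullet> (V *\<^sub>v x) = (\<Sum>a<D. x$a * (row V a \<bullet> x))"
    using V x unfolding scalar_prod_def[of x] by (simp add: atLeast0LessThan)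
  also have "\<dots> = (\<Sum>a<D. \<Sum>b<D. x$a * V$$(a,b) * x$b)"
    using V x by (intro sum.cong refl) (simp add: scalar_prod_def atLeast0LessThan sum_distrib_left mult.assoc)
  finally show ?thesis .
qed

lemma xx_sum: "(x::real vec) \<in> carrier_vec D \<Longrightarrow> x \<bullet> x = (\<Sum>a<D. (x$a)^2)"
  using sprod_self[of x] by simp

definition schur :: "real mat \<Rightarrow> nat \<Rightarrow> real mat" where
  "schur V d = mat d d (\<lambda>(i,j). V$$(Suc i,Suc j) - V$$(Suc i,0) * V$$(0,Suc j) / V$$(0,0))"

lemma det_schur: assumes V: "V \<in> carrier_mat (Suc d) (Suc d)" and a: "V$$(0,0) \<noteq> 0"
  shows "det V = V$$(0,0) * det (schur V d)"
proof -
  define a where "a = V$$(0,0)"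
  define E where "E = mat (Suc d) (Suc d) (\<lambda>(i,j). if i = j then 1 else if j = 0 then - V$$(i,0) / a else 0)"
  have E: "E \<in> carrier_mat (Suc d) (Suc d)" unfolding E_def by simp
  have dE: "det E = 1"
    by (subst det_lower_triangular[OF _ E]) (auto simp: E_def prod_list_diag_prod)
  have EV: "E * V \<in> carrier_mat (Suc d) (Suc d)" using E V by simp
  have EVi: "(E * V) $$ (i,j) = (if i = 0 then V$$(0,j) else V$$(i,j) - V$$(i,0) * V$$(0,j) / a)"
    if i: "i < Suc d" and j: "j < Suc d" for i j
  proof -
    have "(E * V) $$ (i,j) = (\<Sum>k<Suc d. E$$(i,k) * V$$(k,j))"
      using E V i j by (simp add: scalar_prod_def atLeast0LessThan)
    also have "\<dots> = (if i = 0 then V$$(0,j) else V$$(i,j) - V$$(i,0) * V$$(0,j) / a)"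
    proof (cases "i = 0")
      case True
      have "(\<Sum>k<Suc d. E$$(i,k) * V$$(k,j)) = (\<Sum>k<Suc d. if k = 0 then V$$(0,j) else 0)"
        using True by (intro sum.cong refl) (auto simp: E_def)
      thus ?thesis using True by simp
    next
      case False
      have "(\<Sum>k<Suc d. E$$(i,k) * V$$(k,j)) =
            (\<Sum>k<Suc d. (if k = i then V$$(i,j) else 0) + (if k = 0 then - V$$(i,0) / a * V$$(0,j) else 0))"
        using False i by (intro sum.cong refl) (auto simp: E_def)
      also have "\<dots> = V$$(i,j) - V$$(i,0) * V$$(0,j) / a" using i by (simp add: sum.distrib)
      finally show ?thesis using False by simp
    qed
    finally show ?thesis .
  qed
  have "det V = det (E * V)" using det_mult[OF E V] dE by simp
  also have "\<dots> = (\<Sum>i<Suc d. (E * V) $$ (i,0) * cofactor (E * V) i 0)"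
    by (rule laplace_expansion_column[OF EV]) simp
  also have "\<dots> = (E * V) $$ (0,0) * cofactor (E * V) 0 0"
  proof -
    have "(\<Sum>i<Suc d. (E * V) $$ (i,0) * cofactor (E * V) i 0) =
          (\<Sum>i<Suc d. if i = 0 then (E * V) $$ (0,0) * cofactor (E * V) 0 0 else 0)"
      using a by (intro sum.cong refl) (auto simp: EVi a_def)
    thus ?thesis by simp
  qed
  also have "(E * V) $$ (0,0) = a" by (simp add: EVi a_def)
  also have "cofactor (E * V) 0 0 = det (schur V d)"
  proof -
    have "mat_delete (E * V) 0 0 = schur V d"
    proof (rule eq_matI)
      fix i j assume i: "i < dim_row (schur V d)" and j: "j < dim_col (schur V d)"
      hence ij: "i < d" "j < d" by (auto simp: schur_def)
      have "mat_delete (E * V) 0 0 $$ (i,j) = (E * V) $$ (Suc i, Suc j)"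
        using E V ij unfolding mat_delete_def by auto
      also have "\<dots> = V$$(Suc i,Suc j) - V$$(Suc i,0) * V$$(0,Suc j) / a"
        using ij by (subst EVi) auto
      also have "\<dots> = schur V d $$ (i,j)" using ij unfolding schur_def a_def by simp
      finally show "mat_delete (E * V) 0 0 $$ (i,j) = schur V d $$ (i,j)" .
    qed (use EV in \<open>auto simp: schur_def\<close>)
    thus ?thesis unfolding cofactor_def by simp
  qed
  finally show ?thesis unfolding a_def .
qed

lemma sum_lt_Suc: "(\<Sum>k<Suc d. f k) = f 0 + (\<Sum>k<d. f (Suc k))"
  by (rule sum.lessThan_Suc_shift)

lemma det_bound:
  fixes V :: "real mat"
  assumes "V \<in> carrier_mat d d" "\<forall>a<d. \<forall>b<d. V$$(a,b) = V$$(b,a)" "l > 0"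
    "\<forall>x\<in>carrier_vec d. l * (x \<bullet> x) \<le> x \<bullet> (V *\<^sub>v x)"
    "\<forall>x\<in>carrier_vec d. x \<bullet> (V *\<^sub>v x) \<le> M * (x \<bullet> x)"
  shows "l^d \<le> det V \<and> det V \<le> M^d"
  using assms
proof (induction d arbitrary: V)
  case 0
  have "det V = 1" using 0 by (subst det_lower_triangular[of 0]) (auto simp: prod_list_diag_prod)
  thus ?case by simp
next
  case (Suc d)
  note V = Suc.prems(1) and sym = Suc.prems(2) and lpos = Suc.prems(3)
  define a where "a = V$$(0,0)"
  define e0 :: "real vec" where "e0 = unit_vec (Suc d) 0"
  have e0: "e0 \<in> carrier_vec (Suc d)" unfolding e0_def by simp
  have "e0 \<bullet> (V *\<^sub>v e0) = (V *\<^sub>v e0) $ 0" unfolding e0_def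
    by (rule scalar_prod_left_unit) (use V in auto)
  also have "\<dots> = a" using V unfolding e0_def a_def by simp
  finally have "e0 \<bullet> (V *\<^sub>v e0) = a" .
  moreover have "e0 \<bullet> e0 = 1" by (simp add: e0_def)
  ultimately have la: "l \<le> a" and aM: "a \<le> M" using Suc.prems(4,5) e0 by force+
  have apos: "a > 0" using la lpos by simp
  define S where "S = schur V d"
  have S: "S \<in> carrier_mat d d" unfolding S_def schur_def by simp
  have Sij: "S$$(i,j) = V$$(Suc i,Suc j) - V$$(Suc i,0) * V$$(0,Suc j) / a" if "i<d" "j<d" for i j
    using that unfolding S_def schur_def a_def by simp
  have symS: "\<forall>i<d. \<forall>j<d. S$$(i,j) = S$$(j,i)"
    using sym by (auto simp: Sij mult.commute)
  have key: "x \<bullet> (V *\<^sub>v x) = a * t^2 + 2 * t * c + (\<Sum>i<d. \<Sum>j<d. y$i * V$$(Suc i,Suc j) * y$j)"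
    and keyxx: "x \<bullet> x = t^2 + y \<bullet> y"
    if y: "y \<in> carrier_vec d" and x: "x = vec (Suc d) (\<lambda>k. if k = 0 then t else y$(k-1))"
       and c: "c = (\<Sum>j<d. V$$(0,Suc j) * y$j)" for x y t c
  proof -
    have xc: "x \<in> carrier_vec (Suc d)" using x by simp
    have "x \<bullet> (V *\<^sub>v x) = (\<Sum>i<Suc d. \<Sum>j<Suc d. x$i * V$$(i,j) * x$j)" by (rule qf_sum[OF V xc])
    also have "\<dots> = (t * V$$(0,0) * t + (\<Sum>j<d. t * V$$(0,Suc j) * y$j)) +
        (\<Sum>i<d. y$i * V$$(Suc i,0) * t + (\<Sum>j<d. y$i * V$$(Suc i,Suc j) * y$j))"
      unfolding sum_lt_Suc x by simp
    also have "(\<Sum>i<d. y$i * V$$(Suc i,0) * t + (\<Sum>j<d. y$i * V$$(Suc i,Suc j) * y$j))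
       = t * c + (\<Sum>i<d. \<Sum>j<d. y$i * V$$(Suc i,Suc j) * y$j)"
      unfolding c sum.distrib sum_distrib_left using sym
      by (auto intro!: sum.cong simp: mult.commute mult.left_commute)
    also have "(\<Sum>j<d. t * V$$(0,Suc j) * y$j) = t * c"
      unfolding c sum_distrib_left by (simp add: mult.assoc)
    finally show "x \<bullet> (V *\<^sub>v x) = a * t^2 + 2 * t * c + (\<Sum>i<d. \<Sum>j<d. y$i * V$$(Suc i,Suc j) * y$j)"
      unfolding a_def by (simp add: power2_eq_square)
    have "x \<bullet> x = (\<Sum>k<Suc d. (x$k)^2)" by (rule xx_sum[OF xc])
    also have "\<dots> = t^2 + (\<Sum>k<d. (y$k)^2)" unfolding sum_lt_Suc x by simp
    also have "(\<Sum>k<d. (y$k)^2) = y \<bullet> y" using xx_sum[OF y] by simp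
    finally show "x \<bullet> x = t^2 + y \<bullet> y" .
  qed
  have keyS: "y \<bullet> (S *\<^sub>v y) = (\<Sum>i<d. \<Sum>j<d. y$i * V$$(Suc i,Suc j) * y$j) - c^2 / a"
    if y: "y \<in> carrier_vec d" and c: "c = (\<Sum>j<d. V$$(0,Suc j) * y$j)" for y c
  proof -
    have "y \<bullet> (S *\<^sub>v y) = (\<Sum>i<d. \<Sum>j<d. y$i * S$$(i,j) * y$j)" by (rule qf_sum[OF S y])
    also have "\<dots> = (\<Sum>i<d. \<Sum>j<d. y$i * V$$(Suc i,Suc j) * y$j - (y$i * V$$(0,Suc i)) * (V$$(0,Suc j) * y$j) / a)"
      using sym by (intro sum.cong refl) (auto simp: Sij algebra_simps)
    also have "\<dots> = (\<Sum>i<d. \<Sum>j<d. y$i * V$$(Suc i,Suc j) * y$j) - c * c / a"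
      unfolding c sum_subtractf sum_divide_distrib sum_product
      by (simp add: mult.commute)
    finally show ?thesis by (simp add: power2_eq_square)
  qed
  have lowS: "\<forall>y\<in>carrier_vec d. l * (y \<bullet> y) \<le> y \<bullet> (S *\<^sub>v y)"
  proof
    fix y :: "real vec" assume y: "y \<in> carrier_vec d"
    define c where "c = (\<Sum>j<d. V$$(0,Suc j) * y$j)"
    define t where "t = - c / a"
    define x where "x = vec (Suc d) (\<lambda>k. if k = 0 then t else y$(k-1))"
    have xc: "x \<in> carrier_vec (Suc d)" unfolding x_def by simp
    have "x \<bullet> (V *\<^sub>v x) = y \<bullet> (S *\<^sub>v y)"
      unfolding key[OF y x_def c_def] keyS[OF y c_def] t_def using apos
      by (simp add: field_simps power2_eq_square)
    moreover have "l * (x \<bullet> x) \<le> x \<bullet> (V *\<^sub>v x)" using Suc.prems(4) xc by blast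
    moreover have "l * (y \<bullet> y) \<le> l * (x \<bullet> x)" unfolding keyxx[OF y x_def c_def] using lpos by simp
    ultimately show "l * (y \<bullet> y) \<le> y \<bullet> (S *\<^sub>v y)" by linarith
  qed
  have upS: "\<forall>y\<in>carrier_vec d. y \<bullet> (S *\<^sub>v y) \<le> M * (y \<bullet> y)"
  proof
    fix y :: "real vec" assume y: "y \<in> carrier_vec d"
    define c where "c = (\<Sum>j<d. V$$(0,Suc j) * y$j)"
    define x where "x = vec (Suc d) (\<lambda>k. if k = 0 then 0 else y$(k-1))"
    have xc: "x \<in> carrier_vec (Suc d)" unfolding x_def by simp
    have "y \<bullet> (S *\<^sub>v y) \<le> x \<bullet> (V *\<^sub>v x)"
      unfolding key[OF y x_def c_def] keyS[OF y c_def] using apos by simp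
    also have "\<dots> \<le> M * (x \<bullet> x)" using Suc.prems(5) xc by blast
    also have "x \<bullet> x = y \<bullet> y" unfolding keyxx[OF y x_def c_def] by simp
    finally show "y \<bullet> (S *\<^sub>v y) \<le> M * (y \<bullet> y)" .
  qed
  have IH: "l^d \<le> det S \<and> det S \<le> M^d" using Suc.IH[OF S symS lpos lowS upS] .
  have dV: "det V = a * det S" unfolding S_def a_def by (rule det_schur[OF V]) (use apos in \<open>simp add: a_def\<close>)
  have dSpos: "det S > 0" using IH lpos by (meson less_le_trans zero_less_power)
  have "l^(Suc d) \<le> a * det S" using IH la lpos dSpos
    by (simp add: mult_mono)
  moreover have "a * det S \<le> M^(Suc d)" using IH aM apos dSpos
    by (simp add: mult_mono)
  ultimately show ?case unfolding dV by simp
qed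

lemma pick_bij: assumes "finite J" shows "bij_betw (pick J) {..<card J} J"
proof (rule bij_betwI')
  show "\<And>x y. x \<in> {..<card J} \<Longrightarrow> y \<in> {..<card J} \<Longrightarrow> (pick J x = pick J y) = (x = y)"
    by (metis lessThan_iff nat_neq_iff pick_mono less_irrefl)
  show "\<And>x. x \<in> {..<card J} \<Longrightarrow> pick J x \<in> J" by (simp add: pick_in_set)
  fix c assume c: "c \<in> J"
  have "{a\<in>J. a < c} \<subset> J" using c by auto
  hence "card {a\<in>J. a < c} < card J" using assms by (simp add: psubset_card_mono)
  thus "\<exists>x\<in>{..<card J}. c = pick J x" using pick_card_in_set[OF c] by force
qed

lemma submatrix_col_dim: assumes "J \<subseteq> {..<dim_col B}"
  shows "dim_col (submatrix B UNIV J) = card J" "dim_row (submatrix B UNIV J) = dim_row B"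
proof -
  have "{j. j < dim_col B \<and> j \<in> J} = J" using assms by auto
  thus "dim_col (submatrix B UNIV J) = card J" by (simp add: dim_submatrix)
  show "dim_row (submatrix B UNIV J) = dim_row B" by (simp add: dim_submatrix)
qed

lemma opnorm_submatrix: assumes J: "J \<subseteq> {..<dim_col B}"
  shows "opnorm (submatrix B UNIV J) \<le> opnorm B"
proof (rule opnorm_least)
  let ?C = "submatrix B UNIV J"
  have fin: "finite J" using J finite_subset by blast
  have bij: "bij_betw (pick J) {..<card J} J" by (rule pick_bij[OF fin])
  fix y :: "real vec" assume y: "y \<in> carrier_vec (dim_col ?C)" and ny: "vnorm y \<le> 1"
  have dy: "dim_vec y = card J" using y submatrix_col_dim[OF J] by simp
  define idx where "idx c = card {a\<in>J. a < c}" for c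
  have idx_pick: "idx (pick J i) = i" if "i < card J" for i
    unfolding idx_def using that by (simp add: card_pick)
  define y' where "y' = vec (dim_col B) (\<lambda>c. if c \<in> J then y $ idx c else 0)"
  have y': "y' \<in> carrier_vec (dim_col B)" unfolding y'_def by simp
  have gen: "(\<Sum>c<dim_col B. f c * y'$c) = (\<Sum>i<card J. f (pick J i) * y$i)" for f
  proof -
    have "(\<Sum>c<dim_col B. f c * y'$c) = (\<Sum>c\<in>J. f c * y $ idx c) + (\<Sum>c\<in>{..<dim_col B} - J. f c * y'$c)"
      using J fin by (subst sum.subset_diff[of J]) (auto simp: y'_def intro!: sum.cong)
    also have "(\<Sum>c\<in>{..<dim_col B} - J. f c * y'$c) = 0" by (rule sum.neutral) (auto simp: y'_def)
    also have "(\<Sum>c\<in>J. f c * y $ idx c) = (\<Sum>i<card J. f (pick J i) * y $ idx (pick J i))"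
      by (rule sum.reindex_bij_betw[OF bij, symmetric])
    also have "\<dots> = (\<Sum>i<card J. f (pick J i) * y$i)" by (intro sum.cong refl) (simp add: idx_pick)
    finally show ?thesis by simp
  qed
  have "?C *\<^sub>v y = B *\<^sub>v y'"
  proof (rule eq_vecI)
    fix r assume "r < dim_vec (B *\<^sub>v y')"
    hence r: "r < dim_row B" by simp
    have "(?C *\<^sub>v y) $ r = (\<Sum>i<card J. B $$ (r, pick J i) * y$i)"
      using r dy submatrix_col_dim[OF J] J
      by (auto simp: scalar_prod_def atLeast0LessThan submatrix_index dim_submatrix pick_UNIV intro!: sum.cong)
    also have "\<dots> = (\<Sum>c<dim_col B. B $$ (r,c) * y'$c)" by (rule gen[symmetric])
    also have "\<dots> = (B *\<^sub>v y') $ r" using r y' by (simp add: scalar_prod_def atLeast0LessThan)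
    finally show "(?C *\<^sub>v y) $ r = (B *\<^sub>v y') $ r" .
  qed (simp add: submatrix_col_dim[OF J])
  moreover have "vnorm y' = vnorm y"
  proof -
    have "(\<Sum>c<dim_col B. y'$c * y'$c) = (\<Sum>i<card J. y'$(pick J i) * y$i)" by (rule gen)
    also have "\<dots> = (\<Sum>i<card J. y$i * y$i)"
    proof (intro sum.cong refl)
      fix i assume "i \<in> {..<card J}"
      hence i: "i < card J" by simp
      have "pick J i \<in> J" using i by (simp add: pick_in_set)
      hence "pick J i < dim_col B" using J by auto
      thus "y'$(pick J i) * y$i = y$i * y$i" using \<open>pick J i \<in> J\<close> i by (simp add: y'_def idx_pick)
    qed
    finally show ?thesis unfolding vnorm_alt using y' dy by (simp add: power2_eq_square)
  qed
  ultimately show "vnorm (?C *\<^sub>v y) \<le> opnorm B"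
    using opnorm_upper[OF y'] ny by simp
qed

lemma act_off_Suc: "act_off mi i + mi i = (\<Sum>k\<in>{1..<Suc i}. mi k)" if "i \<ge> 1"
  unfolding act_off_def using that by (simp add: add.commute)

lemma act_cols_UN: "act_cols mi S = (\<Union>i\<in>S. {act_off mi i..<act_off mi i + mi i})"
  unfolding act_cols_def by auto

lemma act_cols_sub: assumes "S \<subseteq> {1..q}" shows "act_cols mi S \<subseteq> {..<(\<Sum>i\<in>{1..q}. mi i)}"
proof
  fix c assume "c \<in> act_cols mi S"
  then obtain i where i: "i \<in> S" "c < act_off mi i + mi i" unfolding act_cols_def by auto
  have "act_off mi i + mi i = (\<Sum>k\<in>{1..<Suc i}. mi k)" using i assms by (intro act_off_Suc) auto
  also have "\<dots> \<le> (\<Sum>k\<in>{1..q}. mi k)" using i assms by (intro sum_mono2) auto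
  finally show "c \<in> {..<(\<Sum>i\<in>{1..q}. mi i)}" using i by auto
qed

lemma act_cols_card: assumes "S \<subseteq> {1..q}" shows "card (act_cols mi S) = mS mi S"
proof -
  have fin: "finite S" using assms finite_subset by blast
  have disj: "{act_off mi i..<act_off mi i + mi i} \<inter> {act_off mi i'..<act_off mi i' + mi i'} = {}"
    if "i \<in> S" "i' \<in> S" "i \<noteq> i'" for i i'
  proof -
    have le: "act_off mi a + mi a \<le> act_off mi b" if "a \<in> S" "b \<in> S" "a < b" for a b
    proof -
      have "act_off mi a + mi a = (\<Sum>k\<in>{1..<Suc a}. mi k)" using that assms by (intro act_off_Suc) auto
      also have "\<dots> \<le> (\<Sum>k\<in>{1..<b}. mi k)" using that by (intro sum_mono2) auto
      finally show ?thesis unfolding act_off_def .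
    qed
    show ?thesis
    proof (cases "i < i'")
      case True with le[of i i'] that show ?thesis by auto
    next
      case False hence "i' < i" using that(3) by simp
      with le[of i' i] that show ?thesis by auto
    qed
  qed
  have "card (act_cols mi S) = (\<Sum>i\<in>S. card {act_off mi i..<act_off mi i + mi i})"
    unfolding act_cols_UN using fin disj by (intro card_UN_disjoint) auto
  thus ?thesis unfolding mS_def by simp
qed

lemma BS_carrier: assumes B: "B \<in> carrier_mat n m" and m: "m = (\<Sum>i\<in>{1..q}. mi i)" and S: "S \<subseteq> {1..q}"
  shows "BS mi B S \<in> carrier_mat n (mS mi S)"
proof -
  have J: "act_cols mi S \<subseteq> {..<dim_col B}" using act_cols_sub[OF S] B m by auto
  show ?thesis unfolding BS_def using submatrix_col_dim[OF J] act_cols_card[OF S] B by auto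
qed

lemma opnorm_BS: assumes B: "B \<in> carrier_mat n m" and m: "m = (\<Sum>i\<in>{1..q}. mi i)" and S: "S \<subseteq> {1..q}"
  shows "opnorm (BS mi B S) \<le> opnorm B"
proof -
  have J: "act_cols mi S \<subseteq> {..<dim_col B}" using act_cols_sub[OF S] B m by auto
  show ?thesis unfolding BS_def by (rule opnorm_submatrix[OF J])
qed

lemma fro_sq_sum: "(fro M)^2 = (\<Sum>i<dim_row M. \<Sum>j<dim_col M. (M $$ (i,j))\<^sup>2)"
  unfolding fro_def by (intro real_sqrt_pow2 ordered_comm_monoid_add_class.sum_nonneg) simp

lemma fro_hcat: assumes "dim_row C = dim_row A"
  shows "(fro (hcat A C))^2 = (fro A)^2 + (fro C)^2"
proof -
  have "(fro (hcat A C))^2 = (\<Sum>i<dim_row A. \<Sum>j<dim_col A + dim_col C. (hcat A C $$ (i,j))\<^sup>2)"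
    unfolding fro_sq_sum by (simp add: hcat_def)
  also have "\<dots> = (\<Sum>i<dim_row A. (\<Sum>j<dim_col A. (A $$ (i,j))\<^sup>2) + (\<Sum>j<dim_col C. (C $$ (i,j))\<^sup>2))"
    unfolding sum_split_add by (intro sum.cong refl arg_cong2[where f="(+)"]) (auto simp: hcat_def)
  also have "\<dots> = (fro A)^2 + (fro C)^2" unfolding fro_sq_sum sum.distrib using assms by simp
  finally show ?thesis .
qed

lemma fro_uminus: assumes "M \<in> carrier_mat r c" "N \<in> carrier_mat r c" shows "fro (M - N) = fro (N - M)"
proof -
  have "(\<Sum>i<r. \<Sum>j<c. ((M - N) $$ (i,j))\<^sup>2) = (\<Sum>i<r. \<Sum>j<c. ((N - M) $$ (i,j))\<^sup>2)"
    using assms by (intro sum.cong refl) (simp add: power2_commute)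
  thus ?thesis unfolding fro_def using assms by simp
qed

lemma trace_qf: assumes D: "Dl \<in> carrier_mat r d" and V: "V \<in> carrier_mat d d"
  shows "mtrace (Dl * V * transpose_mat Dl) = (\<Sum>i<r. row Dl i \<bullet> (V *\<^sub>v row Dl i))"
proof -
  have "mtrace (Dl * V * transpose_mat Dl) = (\<Sum>i<r. (Dl * V * transpose_mat Dl) $$ (i,i))"
    unfolding mtrace_def using D V by simp
  also have "\<dots> = (\<Sum>i<r. row Dl i \<bullet> (V *\<^sub>v row Dl i))"
  proof (intro sum.cong refl)
    fix i assume "i \<in> {..<r}"
    hence i: "i < r" by simp
    have "(Dl * V * transpose_mat Dl) $$ (i,i) = (\<Sum>k<d. \<Sum>s<d. Dl$$(i,k) * V$$(k,s) * Dl$$(i,s))"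
      using D V i by (simp add: scalar_prod_def atLeast0LessThan sum_distrib_left ac_simps)
    also have "\<dots> = row Dl i \<bullet> (V *\<^sub>v row Dl i)"
      using D V i by (subst qf_sum[OF V]) auto
    finally show "(Dl * V * transpose_mat Dl) $$ (i,i) = row Dl i \<bullet> (V *\<^sub>v row Dl i)" .
  qed
  finally show ?thesis .
qed

lemma trace_lower: assumes D: "Dl \<in> carrier_mat r d" and V: "V \<in> carrier_mat d d"
  and low: "\<forall>x\<in>carrier_vec d. mu * (x \<bullet> x) \<le> x \<bullet> (V *\<^sub>v x)"
  shows "mu * (fro Dl)^2 \<le> mtrace (Dl * V * transpose_mat Dl)"
proof -
  have "mu * (fro Dl)^2 = (\<Sum>i<r. mu * (row Dl i \<bullet> row Dl i))"
    unfolding fro_sq using D by (simp add: vnorm_sq sum_distrib_left)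
  also have "\<dots> \<le> (\<Sum>i<r. row Dl i \<bullet> (V *\<^sub>v row Dl i))"
    using low D by (intro sum_mono) auto
  finally show ?thesis using trace_qf[OF D V] by simp
qed

fun vsum :: "nat \<Rightarrow> (nat \<Rightarrow> real vec) \<Rightarrow> nat \<Rightarrow> real vec" where
  "vsum d f 0 = 0\<^sub>v d"
| "vsum d f (Suc k) = vsum d f k + f k"

lemma vsum_carrier: "(\<forall>s<k. f s \<in> carrier_vec d) \<Longrightarrow> vsum d f k \<in> carrier_vec d"
  by (induction k) auto

lemma vsum_cong: "(\<forall>s<k. f s = g s) \<Longrightarrow> vsum d f k = vsum d g k"
  by (induction k) auto

lemma vsum_mult: assumes M: "M \<in> carrier_mat d d"
  shows "(\<forall>s<k. f s \<in> carrier_vec d) \<Longrightarrow> M *\<^sub>v vsum d f k = vsum d (\<lambda>s. M *\<^sub>v f s) k"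
proof (induction k)
  case 0 show ?case using M by (auto intro!: eq_vecI simp: scalar_prod_def)
next
  case (Suc k)
  have "M *\<^sub>v vsum d f (Suc k) = M *\<^sub>v vsum d f k + M *\<^sub>v f k"
    using Suc.prems M by (simp add: mult_add_distrib_mat_vec[OF M] vsum_carrier)
  thus ?case using Suc by simp
qed

lemma vnorm_vsum: "(\<forall>s<k. f s \<in> carrier_vec d) \<Longrightarrow> vnorm (vsum d f k) \<le> (\<Sum>s<k. vnorm (f s))"
proof (induction k)
  case 0 show ?case by simp
next
  case (Suc k)
  have "vnorm (vsum d f (Suc k)) \<le> vnorm (vsum d f k) + vnorm (f k)"
    using Suc.prems by (simp add: vnorm_add[of _ d] vsum_carrier)
  thus ?case using Suc by simp
qed

lemma pow_mat_Suc_left: assumes M: "M \<in> carrier_mat d d" shows "M * M ^\<^sub>m k = M ^\<^sub>m (Suc k)"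
proof (induction k)
  case 0 show ?case using M by simp
next
  case (Suc k)
  have "M * M ^\<^sub>m (Suc k) = (M * M ^\<^sub>m k) * M" using M by (simp add: assoc_mult_mat[of _ d d _ d _ d])
  thus ?case using Suc by simp
qed

lemma geom_bound: assumes "0 < eta" "eta < (1::real)"
  shows "(\<Sum>h<k. eta^h) \<le> 1 / (1 - eta)"
proof -
  have "(\<Sum>h<k. eta^h) = (1 - eta^k) / (1 - eta)" using assms by (simp add: sum_gp_strict)
  also have "\<dots> \<le> 1 / (1 - eta)" using assms by (intro divide_right_mono) auto
  finally show ?thesis .
qed

lemma state_bound:
  fixes M :: "real mat" and x e :: "nat \<Rightarrow> real vec"
  assumes M: "M \<in> carrier_mat d d" and x0: "x 0 = 0\<^sub>v d"
    and e: "\<forall>k<K. e k \<in> carrier_vec d"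
    and step: "\<forall>k<K. x (Suc k) = M *\<^sub>v x k + e k"
    and pw: "\<forall>h. opnorm (M ^\<^sub>m h) \<le> zeta * eta ^ h"
    and eb: "\<forall>k<K. vnorm (e k) \<le> E"
    and eta: "0 < eta" "eta < 1" and zeta: "zeta \<ge> 0" and E0: "E \<ge> 0"
    and k: "k \<le> K"
  shows "vnorm (x k) \<le> zeta * E / (1 - eta)"
proof -
  have pc: "\<And>j v. (M ^\<^sub>m j) *\<^sub>v v \<in> carrier_vec d" using M unfolding carrier_vec_def by simp
  have closed: "x k = vsum d (\<lambda>s. (M ^\<^sub>m (k - 1 - s)) *\<^sub>v e s) k" if "k \<le> K" for k
    using that
  proof (induction k)
    case 0 thus ?case using x0 by simp
  next
    case (Suc k)
    have ek: "\<forall>s<k. e s \<in> carrier_vec d" using e Suc.prems by auto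
    have "x (Suc k) = M *\<^sub>v vsum d (\<lambda>s. (M ^\<^sub>m (k - 1 - s)) *\<^sub>v e s) k + e k"
      using Suc step by simp
    also have "M *\<^sub>v vsum d (\<lambda>s. (M ^\<^sub>m (k - 1 - s)) *\<^sub>v e s) k
        = vsum d (\<lambda>s. M *\<^sub>v ((M ^\<^sub>m (k - 1 - s)) *\<^sub>v e s)) k"
      using pc by (intro vsum_mult[OF M]) blast
    also have "\<dots> = vsum d (\<lambda>s. (M ^\<^sub>m (Suc k - 1 - s)) *\<^sub>v e s) k"
    proof (intro vsum_cong allI impI)
      fix s assume s: "s < k"
      have "M *\<^sub>v ((M ^\<^sub>m (k - 1 - s)) *\<^sub>v e s) = (M * M ^\<^sub>m (k - 1 - s)) *\<^sub>v e s"
        using M ek s by (subst assoc_mult_mat_vec[of _ d d _ d]) auto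
      also have "\<dots> = (M ^\<^sub>m (Suc k - 1 - s)) *\<^sub>v e s"
        using s by (simp add: pow_mat_Suc_left[OF M] Suc_diff_Suc)
      finally show "M *\<^sub>v ((M ^\<^sub>m (k - 1 - s)) *\<^sub>v e s) = (M ^\<^sub>m (Suc k - 1 - s)) *\<^sub>v e s" .
    qed
    also have "e k = (M ^\<^sub>m (Suc k - 1 - k)) *\<^sub>v e k" using M e Suc.prems by simp
    finally show ?case by simp
  qed
  have ek: "\<forall>s<k. e s \<in> carrier_vec d" using e k by auto
  have "vnorm (x k) \<le> (\<Sum>s<k. vnorm ((M ^\<^sub>m (k - 1 - s)) *\<^sub>v e s))"
    unfolding closed[OF k] by (rule vnorm_vsum) (use pc in blast)
  also have "\<dots> \<le> (\<Sum>s<k. zeta * eta ^ (k - 1 - s) * E)"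
  proof (rule sum_mono)
    fix s assume "s \<in> {..<k}"
    hence s: "s < k" by simp
    have "vnorm ((M ^\<^sub>m (k - 1 - s)) *\<^sub>v e s) \<le> opnorm (M ^\<^sub>m (k - 1 - s)) * vnorm (e s)"
      using ek s M by (intro opnorm_bound) auto
    also have "\<dots> \<le> (zeta * eta ^ (k - 1 - s)) * E"
      using pw eb s k opnorm_nonneg vnorm_nonneg zeta eta by (intro mult_mono) auto
    finally show "vnorm ((M ^\<^sub>m (k - 1 - s)) *\<^sub>v e s) \<le> zeta * eta ^ (k - 1 - s) * E" .
  qed
  also have "\<dots> = zeta * E * (\<Sum>s<k. eta ^ (k - 1 - s))"
    by (simp add: sum_distrib_left ac_simps)
  also have "(\<Sum>s<k. eta ^ (k - 1 - s)) = (\<Sum>h<k. eta ^ h)"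
    using sum.nat_diff_reindex[of "\<lambda>h. eta ^ h" k] by simp
  also have "zeta * E * (\<Sum>h<k. eta ^ h) \<le> zeta * E * (1 / (1 - eta))"
    using zeta geom_bound[OF eta] E0 by (intro mult_left_mono) auto
  finally show ?thesis by simp
qed

lemma zb_arith:
  fixes X U a kap th Qw P s2L m n :: real
  assumes X0: "0 \<le> X" and Xb: "X \<le> a * (th * Qw + P)" and U0: "0 \<le> U" and Ub: "U \<le> kap * X + Qw"
    and a1: "a \<ge> 1" and k1: "kap \<ge> 1" and th0: "th \<ge> 0" and Qw0: "Qw \<ge> 0" and P0: "P \<ge> 0"
    and Qw2: "Qw^2 = 10 * kap^2 * m * s2L" and P2: "P^2 = 5 * n * s2L" and s0: "s2L \<ge> 0"
    and m0: "m \<ge> 0" and n0: "n \<ge> 0"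
  shows "X^2 + U^2 \<le> 20 * a^2 * (1 + kap)^2 * s2L * (2 * (th^2 + 1) * kap^2 * m + n)"
proof -
  define W where "W = s2L * (2 * th^2 * kap^2 * m + n)"
  have W0: "W \<ge> 0" unfolding W_def using s0 m0 n0 th0 by simp
  have "X^2 \<le> (a * (th * Qw + P))^2" using X0 Xb by (simp add: power_mono)
  also have "\<dots> \<le> a^2 * (2 * ((th * Qw)^2 + P^2))"
  proof -
    have "(th * Qw + P)^2 \<le> 2 * ((th * Qw)^2 + P^2)"
      unfolding power2_sum distrib_left using sum_squares_bound[of "th * Qw" P] by linarith
    thus ?thesis by (simp add: power_mult_distrib mult_left_mono)
  qed
  also have "\<dots> = 10 * a^2 * W" unfolding W_def using Qw2 P2 by (simp add: power_mult_distrib algebra_simps)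
  finally have X2: "X^2 \<le> 10 * a^2 * W" .
  have "U^2 \<le> (kap * X + Qw)^2" using U0 Ub by (simp add: power_mono)
  also have "\<dots> \<le> 2 * ((kap * X)^2 + Qw^2)"
    unfolding power2_sum distrib_left using sum_squares_bound[of "kap * X" Qw] by linarith
  also have "\<dots> = 2 * kap^2 * X^2 + 20 * kap^2 * m * s2L" using Qw2 by (simp add: power_mult_distrib)
  finally have U2: "U^2 \<le> 2 * kap^2 * X^2 + 20 * kap^2 * m * s2L" .
  have "X^2 + U^2 \<le> (1 + 2 * kap^2) * (10 * a^2 * W) + 20 * kap^2 * m * s2L"
  proof -
    have "2 * kap^2 * X^2 \<le> 2 * kap^2 * (10 * a^2 * W)" using X2 by (intro mult_left_mono) auto
    moreover have "(1 + 2 * kap^2) * (10 * a^2 * W) = 10 * a^2 * W + 2 * kap^2 * (10 * a^2 * W)"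
      by (simp add: algebra_simps)
    ultimately show ?thesis using U2 X2 by linarith
  qed
  also have "\<dots> \<le> 20 * a^2 * (1 + kap)^2 * W + 40 * a^2 * (1 + kap)^2 * s2L * kap^2 * m"
  proof -
    have "(1 + 2 * kap^2) * 10 \<le> 20 * (1 + kap)^2" using k1 by (simp add: power2_eq_square algebra_simps)
    hence A: "(1 + 2 * kap^2) * (10 * a^2 * W) \<le> 20 * a^2 * (1 + kap)^2 * W"
    proof -
      have "((1 + 2 * kap^2) * 10) * (a^2 * W) \<le> (20 * (1 + kap)^2) * (a^2 * W)"
        using \<open>(1 + 2 * kap^2) * 10 \<le> 20 * (1 + kap)^2\<close> W0 by (intro mult_right_mono) auto
      thus ?thesis by (simp add: algebra_simps)
    qed
    have "20 * kap^2 * m * s2L \<le> 40 * a^2 * (1 + kap)^2 * s2L * kap^2 * m"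
    proof -
      have h1: "1 \<le> a^2" using a1 by (simp add: one_le_power)
      have h2: "1 \<le> (1 + kap)^2" using k1 by (simp add: one_le_power)
      have "1 * 1 \<le> a^2 * (1 + kap)^2" using h1 h2 by (intro mult_mono) auto
      hence "1 \<le> 2 * a^2 * (1 + kap)^2" by simp
      hence "20 * (kap^2 * m * s2L) * 1 \<le> 20 * (kap^2 * m * s2L) * (2 * a^2 * (1 + kap)^2)"
        using m0 s0 by (intro mult_left_mono) auto
      thus ?thesis by (simp add: algebra_simps)
    qed
    with A show ?thesis by linarith
  qed
  also have "\<dots> = 20 * a^2 * (1 + kap)^2 * s2L * (2 * (th^2 + 1) * kap^2 * m + n)"
    unfolding W_def by (simp add: algebra_simps)
  finally show ?thesis .
qed

lemma swapq: fixes y :: "real vec" shows "(\<Sum>a<D. \<Sum>b<D. y$a * (\<Sum>x\<in>X. h x a b) * y$b) = (\<Sum>x\<in>X. \<Sum>a<D. \<Sum>b<D. y$a * h x a b * y$b)"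
proof -
  have "(\<Sum>a<D. \<Sum>b<D. y$a * (\<Sum>x\<in>X. h x a b) * y$b) = (\<Sum>a<D. \<Sum>b<D. \<Sum>x\<in>X. y$a * h x a b * y$b)"
    by (simp add: sum_distrib_left sum_distrib_right)
  also have "\<dots> = (\<Sum>a<D. \<Sum>x\<in>X. \<Sum>b<D. y$a * h x a b * y$b)"
    by (rule sum.cong[OF refl], rule sum.swap)
  also have "\<dots> = (\<Sum>x\<in>X. \<Sum>a<D. \<Sum>b<D. y$a * h x a b * y$b)"
    by (rule sum.swap)
  finally show ?thesis .
qed

lemma qf_rank1: fixes z y :: "real vec" assumes "z \<in> carrier_vec D" "y \<in> carrier_vec D"
  shows "(\<Sum>a<D. \<Sum>b<D. y$a * (z$a * z$b) * y$b) = (z \<bullet> y)^2"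
proof -
  have "(z \<bullet> y)^2 = (\<Sum>a<D. z$a * y$a) * (\<Sum>b<D. z$b * y$b)"
    using assms by (simp add: scalar_prod_def atLeast0LessThan power2_eq_square)
  also have "\<dots> = (\<Sum>a<D. \<Sum>b<D. y$a * (z$a * z$b) * y$b)"
    by (simp add: sum_product ac_simps)
  finally show ?thesis by simp
qed

lemma qf_V:
  fixes W :: "real mat" and z :: "nat \<Rightarrow> nat \<Rightarrow> real vec"
  assumes W: "W = mat D D (\<lambda>(a,b). (if a = b then lam else 0) +
           (\<Sum>l\<in>I1. \<Sum>t\<in>I2 l. \<Sum>k\<in>I3. z t k $ a * z t k $ b))"
    and z: "\<forall>l\<in>I1. \<forall>t\<in>I2 l. \<forall>k\<in>I3. z t k \<in> carrier_vec D"
    and y: "y \<in> carrier_vec D"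
  shows "y \<bullet> (W *\<^sub>v y) = lam * (y \<bullet> y) + (\<Sum>l\<in>I1. \<Sum>t\<in>I2 l. \<Sum>k\<in>I3. (z t k \<bullet> y)^2)"
proof -
  have Wc: "W \<in> carrier_mat D D" unfolding W by simp
  have "y \<bullet> (W *\<^sub>v y) = (\<Sum>a<D. \<Sum>b<D. y$a * W$$(a,b) * y$b)" by (rule qf_sum[OF Wc y])
  also have "\<dots> = (\<Sum>a<D. \<Sum>b<D. y$a * (if a = b then lam else 0) * y$b) +
      (\<Sum>a<D. \<Sum>b<D. y$a * (\<Sum>l\<in>I1. \<Sum>t\<in>I2 l. \<Sum>k\<in>I3. z t k $ a * z t k $ b) * y$b)"
    unfolding W by (simp add: sum.distrib distrib_left distrib_right)
  also have "(\<Sum>a<D. \<Sum>b<D. y$a * (if a = b then lam else 0) * y$b) = lam * (y \<bullet> y)"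
  proof -
    have "(\<Sum>a<D. \<Sum>b<D. y$a * (if a = b then lam else 0) * y$b) = (\<Sum>a<D. lam * (y$a)^2)"
    proof (intro sum.cong refl)
      fix a assume "a \<in> {..<D}"
      have "(\<Sum>b<D. y$a * (if a = b then lam else 0) * y$b) = (\<Sum>b<D. if a = b then y$a * lam * y$b else 0)"
        by (intro sum.cong refl) auto
      also have "\<dots> = y$a * lam * y$a" using \<open>a \<in> {..<D}\<close> by (simp add: sum.delta)
      finally show "(\<Sum>b<D. y$a * (if a = b then lam else 0) * y$b) = lam * (y$a)^2"
        by (simp add: power2_eq_square ac_simps)
    qed
    thus ?thesis using xx_sum[OF y] by (simp add: sum_distrib_left)
  qed
  also have "(\<Sum>a<D. \<Sum>b<D. y$a * (\<Sum>l\<in>I1. \<Sum>t\<in>I2 l. \<Sum>k\<in>I3. z t k $ a * z t k $ b) * y$b)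
      = (\<Sum>l\<in>I1. \<Sum>t\<in>I2 l. \<Sum>k\<in>I3. \<Sum>a<D. \<Sum>b<D. y$a * (z t k $ a * z t k $ b) * y$b)"
    by (simp only: swapq)
  also have "\<dots> = (\<Sum>l\<in>I1. \<Sum>t\<in>I2 l. \<Sum>k\<in>I3. (z t k \<bullet> y)^2)"
    using z y by (intro sum.cong refl) (simp add: qf_rank1)
  finally show ?thesis .
qed

lemma qf_shift: assumes Vm: "Vm \<in> carrier_mat d d" and y: "(y::real vec) \<in> carrier_vec d"
  shows "y \<bullet> (((Vm - a \<cdot>\<^sub>m 1\<^sub>m d) - b \<cdot>\<^sub>m 1\<^sub>m d) *\<^sub>v y) = y \<bullet> (Vm *\<^sub>v y) - (a + b) * (y \<bullet> y)"
proof -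
  let ?W = "(Vm - a \<cdot>\<^sub>m 1\<^sub>m d) - b \<cdot>\<^sub>m 1\<^sub>m d"
  have W: "?W \<in> carrier_mat d d" using Vm unfolding carrier_mat_def by auto
  have "y \<bullet> (?W *\<^sub>v y) = (\<Sum>i<d. \<Sum>j<d. y$i * ?W$$(i,j) * y$j)" by (rule qf_sum[OF W y])
  also have "\<dots> = (\<Sum>i<d. \<Sum>j<d. y$i * Vm$$(i,j) * y$j - (if i = j then (a + b) * (y$i * y$j) else 0))"
    using Vm by (intro sum.cong refl) (auto simp: algebra_simps)
  also have "\<dots> = (\<Sum>i<d. \<Sum>j<d. y$i * Vm$$(i,j) * y$j) - (\<Sum>i<d. (a + b) * (y$i)^2)"
    by (simp add: sum_subtractf power2_eq_square)
  also have "\<dots> = y \<bullet> (Vm *\<^sub>v y) - (a + b) * (y \<bullet> y)"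
    using qf_sum[OF Vm y] xx_sum[OF y] by (simp add: sum_distrib_left)
  finally show ?thesis .
qed

lemma ln_arith:
  fixes lam X Y pr Dv c0 :: real and dd nm :: nat
  assumes lam: "0 < lam" and X0: "0 \<le> X" and XY: "X / lam \<le> Y / pr" and pr: "pr \<ge> 1" and Y0: "Y \<ge> 0"
    and Dv: "0 < Dv" "Dv \<le> (lam + X)^dd" and dd: "1 \<le> dd" "dd \<le> nm" and c0: "c0 \<ge> 1"
  shows "ln (c0 * pr * Dv / lam^dd) \<le> nm * ln (c0 * (pr + Y))"
proof -
  have "Dv / lam^dd \<le> (lam + X)^dd / lam^dd" using Dv lam by (simp add: divide_right_mono)
  also have "\<dots> = (1 + X / lam)^dd" using lam by (subst power_divide[symmetric]) (simp add: add_divide_distrib)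
  also have "\<dots> \<le> (1 + Y / pr)^dd" using XY X0 lam by (intro power_mono) auto
  also have "\<dots> = ((pr + Y) / pr)^dd" using pr by (simp add: add_divide_distrib)
  finally have R: "Dv / lam^dd \<le> ((pr + Y) / pr)^dd" .
  have pos: "0 < Dv / lam^dd" using Dv lam by simp
  have lp: "ln pr \<ge> 0" using pr by simp
  have lc: "ln c0 \<ge> 0" using c0 by simp
  have lpy: "ln (pr + Y) \<ge> 0" using pr Y0 by simp
  define q where "q = Dv / lam^dd"
  have eq: "c0 * pr * Dv / lam^dd = c0 * (pr * q)" unfolding q_def by simp
  have "ln (c0 * (pr * q)) = ln c0 + (ln pr + ln q)"
    using c0 pr pos unfolding q_def[symmetric] by (simp add: ln_mult)
  hence "ln (c0 * pr * Dv / lam^dd) = ln c0 + (ln pr + ln (Dv / lam^dd))" unfolding eq q_def .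
  also have "ln (Dv / lam^dd) \<le> ln (((pr + Y) / pr)^dd)" using R pos by simp
  also have "ln (((pr + Y) / pr)^dd) = dd * (ln (pr + Y) - ln pr)"
    using pr Y0 by (simp add: ln_realpow ln_div)
  finally have A: "ln (c0 * pr * Dv / lam^dd) \<le> ln c0 + (ln pr + (dd * ln (pr + Y) - dd * ln pr))"
    by (simp add: right_diff_distrib)
  have "1 * ln pr \<le> real dd * ln pr" using dd lp by (intro mult_right_mono) auto
  hence "ln (c0 * pr * Dv / lam^dd) \<le> ln c0 + dd * ln (pr + Y)" using A by simp
  also have "\<dots> \<le> nm * ln c0 + nm * ln (pr + Y)"
  proof -
    have "1 * ln c0 \<le> real nm * ln c0" using dd lc by (intro mult_right_mono) auto
    moreover have "real dd * ln (pr + Y) \<le> real nm * ln (pr + Y)" using dd lpy by (intro mult_right_mono) auto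
    ultimately show ?thesis by simp
  qed
  also have "\<dots> = nm * ln (c0 * (pr + Y))"
  proof -
    have "ln (c0 * (pr + Y)) = ln c0 + ln (pr + Y)" using c0 pr Y0 by (simp add: ln_mult)
    thus ?thesis by (simp only: distrib_left)
  qed
  finally show ?thesis .
qed

lemma final_arith:
  fixes op Nm1 t1 ii s2 lam th e nn nm Lt Lth F :: real
  assumes Nm1: "Nm1 \<ge> 1" and ii: "ii \<ge> 1" and s2: "s2 > 0" and lam: "lam > 0"
    and op0: "op \<ge> 0"
    and tr: "(Nm1 * t1 * ii * s2 / 80) * op^2 \<le> 4 * s2 * nn * Lth + 2 * lam * F"
    and F: "F \<le> 2 * nn * th^2" and Lth: "Lth \<le> nm * Lt" and nn: "nn \<ge> 2" and nm: "nm \<ge> nn"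
    and Lt: "Lt > 0" and e: "e^2 > 0"
    and t1: "t1 \<ge> 160 * nn * (lam * th^2 * nn / s2 + 2 * nm * Lt) / (Nm1 * e^2)"
  shows "op \<le> sqrt (e^2 / ii)"
proof -
  define R where "R = 160 * nn * (lam * th^2 * nn / s2 + 2 * nm * Lt)"
  have th2: "th^2 \<ge> 0" by simp
  have Rpos: "R > 0" unfolding R_def using nn nm Lt lam s2 th2
    by (intro mult_pos_pos add_nonneg_pos) (auto intro!: divide_nonneg_pos mult_nonneg_nonneg)
  have t1R: "t1 * (Nm1 * e^2) \<ge> R" using t1 Nm1 e unfolding R_def[symmetric] by (simp add: pos_divide_le_eq)
  have t1pos: "t1 > 0"
  proof (rule ccontr)
    assume "\<not> t1 > 0"
    hence "t1 * (Nm1 * e^2) \<le> 0" using Nm1 e by (simp add: mult_nonpos_nonneg)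
    thus False using t1R Rpos by simp
  qed
  have "4 * s2 * nn * Lth \<le> 4 * s2 * nn * (nm * Lt)" using Lth s2 nn by (intro mult_left_mono) auto
  moreover have "2 * lam * F \<le> 2 * lam * (2 * nn * th^2)" using F lam by simp
  moreover have "2 * lam * (2 * nn * th^2) \<le> 2 * lam * (nn * nn * th^2)"
  proof -
    have "2 * nn \<le> nn * nn" using mult_right_mono[OF assms(9), of nn] assms(9) by simp
    hence "2 * nn * th^2 \<le> nn * nn * th^2" using th2 by (rule mult_right_mono)
    thus ?thesis using lam by simp
  qed
  moreover have "s2 * R / 80 = 4 * s2 * nn * (nm * Lt) + 2 * lam * (nn * nn * th^2)"
    unfolding R_def using s2 by (simp add: field_simps power2_eq_square)
  ultimately have "(Nm1 * t1 * ii * s2 / 80) * op^2 \<le> s2 * R / 80" using tr by linarith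
  hence "s2 * (Nm1 * t1 * ii * op^2) \<le> s2 * R" by (simp add: field_simps)
  hence "Nm1 * t1 * ii * op^2 \<le> R" using s2 by simp
  also have "\<dots> \<le> Nm1 * t1 * e^2" using t1R by (simp add: ac_simps)
  finally have "(Nm1 * t1) * (ii * op^2) \<le> (Nm1 * t1) * e^2" by (simp add: ac_simps)
  hence "ii * op^2 \<le> e^2" using Nm1 t1pos by (simp add: mult_le_cancel_left_pos)
  hence "op^2 \<le> e^2 / ii" using ii by (simp add: field_simps)
  thus ?thesis using op0 by (simp add: real_le_rsqrt)
qed

lemma add_carrier2: "(w::real vec) \<in> carrier_vec n \<Longrightarrow> v + w \<in> carrier_vec n"
  unfolding carrier_vec_def by simp

lemma round_z_bound:
  fixes A BSj KGj :: "real mat" and xt ut wtt wt' :: "nat \<Rightarrow> real vec" and L0 sigma th kap zeta0 eta0 zb :: real and n m mj N k :: nat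
  assumes A: "A \<in> carrier_mat n n" and BSc: "BSj \<in> carrier_mat n mj" and KGc: "KGj \<in> carrier_mat mj n"
    and pw: "\<forall>k. opnorm ((A + BSj * KGj) ^\<^sub>m k) \<le> zeta0 * eta0 ^ k"
    and ze: "zeta0 \<ge> 1" "0 < eta0" "eta0 < 1"
    and opBS: "opnorm BSj \<le> th" and opKG: "opnorm KGj \<le> kap" and kap1: "kap \<ge> 1"
    and x0: "xt 0 = 0\<^sub>v n"
    and wc: "\<forall>k<N. wtt k \<in> carrier_vec n"
    and wtc: "\<forall>k<N. wt' k \<in> carrier_vec mj"
    and u: "\<forall>k<N. ut k = KGj *\<^sub>v xt k + wt' k"
    and dyn: "\<forall>k<N. xt (Suc k) = A *\<^sub>v xt k + BSj *\<^sub>v ut k + wtt k"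
    and Ew: "\<forall>k<N. vnorm (wtt k) \<le> sigma * sqrt (5 * n * L0)"
    and Ewt: "\<forall>k<N. vnorm (wt' k) \<le> kap * sigma * sqrt (10 * m * L0)"
    and L0: "L0 > 0" and sig: "sigma > 0"
    and zb: "zb = 20 * zeta0\<^sup>2 * (1 + kap)\<^sup>2 * sigma\<^sup>2 / (1 - eta0)\<^sup>2
        * (2 * (th\<^sup>2 + 1) * kap\<^sup>2 * m + n) * L0"
    and k: "k < N"
  shows "(vnorm (xt k @\<^sub>v ut k))^2 \<le> zb" and "xt k \<in> carrier_vec n"
proof -
  let ?M = "A + BSj * KGj"
  let ?Qw = "kap * sigma * sqrt (10 * m * L0)"
  let ?P = "sigma * sqrt (5 * n * L0)"
  define Eb where "Eb = th * ?Qw + ?P"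
  have th0: "th \<ge> 0" using opBS opnorm_nonneg[of BSj] by simp
  have Qw0: "?Qw \<ge> 0" using kap1 sig L0 by simp
  have P0: "?P \<ge> 0" using sig L0 by simp
  have Eb0: "Eb \<ge> 0" unfolding Eb_def using th0 Qw0 P0 by simp
  have Mc: "?M \<in> carrier_mat n n" using A BSc KGc by simp
  have xc: "xt k' \<in> carrier_vec n" if "k' \<le> N" for k'
  proof (cases k')
    case 0 thus ?thesis using x0 by simp
  next
    case (Suc k'')
    hence "xt k' = A *\<^sub>v xt k'' + BSj *\<^sub>v ut k'' + wtt k''" using dyn that by simp
    moreover have "wtt k'' \<in> carrier_vec n" using wc that Suc by simp
    ultimately show ?thesis by (simp add: add_carrier2)
  qed
  define e where "e k' = BSj *\<^sub>v wt' k' + wtt k'" for k'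
  have ec: "\<forall>k'<N. e k' \<in> carrier_vec n" unfolding e_def using wc by (simp add: add_carrier2)
  have step: "\<forall>k'<N. xt (Suc k') = ?M *\<^sub>v xt k' + e k'"
  proof (intro allI impI)
    fix k' assume k': "k' < N"
    have xk: "xt k' \<in> carrier_vec n" using xc k' by simp
    have wk: "wt' k' \<in> carrier_vec mj" using wtc k' by simp
    have Kx: "KGj *\<^sub>v xt k' \<in> carrier_vec mj" using KGc xk by simp
    have "?M *\<^sub>v xt k' = A *\<^sub>v xt k' + BSj *\<^sub>v (KGj *\<^sub>v xt k')"
      using A BSc KGc xk by (simp add: add_mult_distrib_mat_vec[of A n n] assoc_mult_mat_vec[of _ n mj _ n])
    moreover have "BSj *\<^sub>v ut k' = BSj *\<^sub>v (KGj *\<^sub>v xt k') + BSj *\<^sub>v wt' k'"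
      using u k' BSc Kx wk by (simp add: mult_add_distrib_mat_vec[of BSj n mj])
    moreover have "xt (Suc k') = A *\<^sub>v xt k' + BSj *\<^sub>v ut k' + wtt k'" using dyn k' by simp
    ultimately have eq: "xt (Suc k') = A *\<^sub>v xt k' + (BSj *\<^sub>v (KGj *\<^sub>v xt k') + BSj *\<^sub>v wt' k') + wtt k'"
      "?M *\<^sub>v xt k' + e k' = (A *\<^sub>v xt k' + BSj *\<^sub>v (KGj *\<^sub>v xt k')) + (BSj *\<^sub>v wt' k' + wtt k')"
      unfolding e_def by simp_all
    have c1: "A *\<^sub>v xt k' \<in> carrier_vec n" using A xk by simp
    have c2: "BSj *\<^sub>v (KGj *\<^sub>v xt k') \<in> carrier_vec n" using BSc Kx by simp
    have c3: "BSj *\<^sub>v wt' k' \<in> carrier_vec n" using BSc wk by simp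
    have c4: "wtt k' \<in> carrier_vec n" using wc k' by simp
    show "xt (Suc k') = ?M *\<^sub>v xt k' + e k'" unfolding eq using c1 c2 c3 c4 by simp
  qed
  have eb: "\<forall>k'<N. vnorm (e k') \<le> Eb"
  proof (intro allI impI)
    fix k' assume k': "k' < N"
    have wk: "wt' k' \<in> carrier_vec mj" using wtc k' by simp
    have Bw: "BSj *\<^sub>v wt' k' \<in> carrier_vec n" using BSc wk by simp
    have "vnorm (e k') \<le> vnorm (BSj *\<^sub>v wt' k') + vnorm (wtt k')"
      unfolding e_def using wc k' Bw by (intro vnorm_add[of _ n]) auto
    also have "vnorm (BSj *\<^sub>v wt' k') \<le> opnorm BSj * vnorm (wt' k')"
      using BSc wk by (intro opnorm_bound) auto
    also have "opnorm BSj * vnorm (wt' k') \<le> th * ?Qw"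
      using opBS Ewt k' th0 opnorm_nonneg vnorm_nonneg by (intro mult_mono) auto
    finally show "vnorm (e k') \<le> Eb" unfolding Eb_def using Ew[rule_format, OF k'] by linarith
  qed
  define a where "a = zeta0 / (1 - eta0)"
  have a1: "a \<ge> 1" unfolding a_def using ze by (simp add: field_simps)
  have xb: "vnorm (xt k) \<le> a * Eb"
    using state_bound[OF Mc x0 ec step pw eb ze(2) ze(3) _ Eb0, of k] ze k
    unfolding a_def by (simp add: field_simps)
  have ub: "vnorm (ut k) \<le> kap * vnorm (xt k) + ?Qw"
  proof -
    have xk: "xt k \<in> carrier_vec n" using xc k by simp
    have wk: "wt' k \<in> carrier_vec mj" using wtc k by simp
    have "vnorm (ut k) \<le> vnorm (KGj *\<^sub>v xt k) + vnorm (wt' k)"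
      using u k KGc xk wk by (simp add: vnorm_add[of _ mj])
    also have "vnorm (KGj *\<^sub>v xt k) \<le> opnorm KGj * vnorm (xt k)"
      using KGc xk by (intro opnorm_bound) auto
    also have "\<dots> \<le> kap * vnorm (xt k)" using opKG vnorm_nonneg by (intro mult_right_mono) auto
    finally show ?thesis using Ewt[rule_format, OF k] by linarith
  qed
  have "(vnorm (xt k))^2 + (vnorm (ut k))^2 \<le> 20 * a^2 * (1 + kap)^2 * (sigma^2 * L0) * (2 * (th^2 + 1) * kap^2 * m + n)"
  proof (rule zb_arith)
    show "vnorm (xt k) \<le> a * (th * ?Qw + ?P)" using xb unfolding Eb_def .
    show "?Qw^2 = 10 * kap^2 * real m * (sigma^2 * L0)" using L0 by (simp add: power_mult_distrib)
    show "?P^2 = 5 * real n * (sigma^2 * L0)" using L0 by (simp add: power_mult_distrib)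
  qed (use vnorm_nonneg ub a1 kap1 th0 Qw0 P0 L0 in auto)
  also have "\<dots> = zb" unfolding zb a_def using ze by (simp add: field_simps power_divide)
  finally show "(vnorm (xt k @\<^sub>v ut k))^2 \<le> zb" by (simp add: vnorm_append_sq)
  show "xt k \<in> carrier_vec n" using xc k by simp
qed

lemma lemma9_core:
  fixes n m q H N T p ell :: nat
    and mi :: "nat \<Rightarrow> nat"
    and A B :: "real mat"
    and Q Qf R :: "nat \<Rightarrow> real mat"
    and nu sigma lambda delta zeta0 eta0 :: real
    and zeta eta :: "nat set \<Rightarrow> real"
    and G :: "nat \<Rightarrow> nat set" and KG :: "nat \<Rightarrow> real mat"
    and eps0 beta vartheta kappa sigQ sigR zb :: real
    and tau1 ne tau2 :: nat and Tij :: "nat \<Rightarrow> nat \<Rightarrow> nat"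
    and S :: "nat \<Rightarrow> nat set"
    and x u w wt :: "nat \<Rightarrow> nat \<Rightarrow> real vec"
    and Thhat :: "nat \<Rightarrow> nat \<Rightarrow> real mat"
    and Theta :: "nat \<Rightarrow> real mat"
    and z :: "nat \<Rightarrow> nat \<Rightarrow> real vec"
    and V :: "nat \<Rightarrow> nat \<Rightarrow> real mat"
    and obj :: "nat \<Rightarrow> nat \<Rightarrow> real mat \<Rightarrow> real"
  assumes
    m_def: "m = (\<Sum>i\<in>{1..q}. mi i)"
    and A_dim: "A \<in> carrier_mat n n" and B_dim: "B \<in> carrier_mat n m"
    and N_ge: "N \<ge> 2" and T_pos: "T \<ge> 1"
    and vartheta_def: "vartheta = max (opnorm A) (opnorm B)"
    and ass2: "1 \<le> ell \<and> ell \<le> n - 1 \<and> nu > 0 \<and>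
       (\<forall>S'. S' \<subseteq> {1..q} \<and> card S' = H \<longrightarrow> svmin (ctrb A (BS mi B S') ell) \<ge> nu)"
    and ass4_part: "p \<ge> 1 \<and> (\<Union>j\<in>{1..p}. G j) = {1..q} \<and>
       (\<forall>j\<in>{1..p}. G j \<noteq> {} \<and> card (G j) \<le> H) \<and>
       (\<forall>j\<in>{1..p}. \<forall>j'\<in>{1..p}. j \<noteq> j' \<longrightarrow> G j \<inter> G j' = {})"
    and ass4_K: "\<forall>j\<in>{1..p}. KG j \<in> carrier_mat (mS mi (G j)) n \<and>
       (\<forall>k. opnorm ((A + BS mi B (G j) * KG j) ^\<^sub>m k) \<le> zeta0 * eta0 ^ k)"
    and zeta0_eta0: "zeta0 \<ge> 1 \<and> 0 < eta0 \<and> eta0 < 1"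
    and kappa_def: "kappa = max (Max {opnorm (KG j) | j. j \<in> {1..p}}) 1"
    and lambda_pos: "lambda > 0" and sigma_pos: "sigma > 0"
    and delta: "0 < delta \<and> delta < 1"
    and zb_def: "zb = 20 * zeta0\<^sup>2 * (1 + kappa)\<^sup>2 * sigma\<^sup>2 / (1 - eta0)\<^sup>2
        * (2 * (vartheta\<^sup>2 + 1) * kappa\<^sup>2 * m + n) * ln (8 * N * T / delta)"
    and tau1_def: "tau1 = nat \<lceil>160 * n * (lambda * vartheta\<^sup>2 * n / sigma\<^sup>2
        + 2 * (n + m) * ln (8 * n / delta * (p + N * T * zb / lambda)))
        / ((real N - 1) * eps0\<^sup>2)\<rceil>"
    and ne_def: "ne = nat \<lceil>sqrt T / (tau1 * p)\<rceil>"
    and tau2_int: "ne * tau1 * p \<le> T \<and> ne dvd (T - ne * tau1 * p)"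
    and tau2_def: "tau2 = (T - ne * tau1 * p) div ne"
    and Tij_def: "\<forall>i j. Tij i j = 1 + (i - 1) * (p * tau1 + tau2) + (j - 1) * tau1"
    and x0: "\<forall>t\<in>{1..T}. x t 0 = 0\<^sub>v n"
    and w_dim: "\<forall>t\<in>{1..T}. \<forall>k<N. w t k \<in> carrier_vec n"
    and u_dim: "\<forall>t\<in>{1..T}. \<forall>k<N. u t k \<in> carrier_vec (mS mi (S t))"
    and dyn: "\<forall>t\<in>{1..T}. \<forall>k<N.
        x t (Suc k) = A *\<^sub>v x t k + BS mi B (S t) *\<^sub>v u t k + w t k"
    and est: "\<forall>i\<in>{1..ne}. \<forall>j\<in>{1..p}. \<forall>t. Tij i j \<le> t \<and> t < Tij i (Suc j) \<longrightarrow>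
        S t = G j \<and> (\<forall>k<N. wt t k \<in> carrier_vec (mS mi (G j)) \<and>
                           u t k = KG j *\<^sub>v x t k + wt t k)"
    and z_def: "\<forall>t k. z t k = x t k @\<^sub>v u t k"
    and Theta_def: "\<forall>j. Theta j = hcat A (BS mi B (G j))"
    and Thhat_min: "\<forall>i\<in>{1..ne}. \<forall>j\<in>{1..p}.
        Thhat j i \<in> carrier_mat n (n + mS mi (G j)) \<and>
        (\<forall>Y \<in> carrier_mat n (n + mS mi (G j)). obj j i (Thhat j i) \<le> obj j i Y)"
    and V_def: "\<forall>j i. V j i = mat (n + mS mi (G j)) (n + mS mi (G j))
        (\<lambda>(a,b). (if a = b then lambda else 0) +
           (\<Sum>l\<in>{1..i}. \<Sum>t\<in>{Tij l j..<Tij l (Suc j)}. \<Sum>k<N. z t k $ a * z t k $ b))"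
    and E_w: "\<forall>t\<in>{1..T}. \<forall>k<N. vnorm (w t k) \<le> sigma * sqrt (5 * n * ln (8 * N * T / delta))"
    and E_wt: "\<forall>i\<in>{1..ne}. \<forall>j\<in>{1..p}. \<forall>t. Tij i j \<le> t \<and> t < Tij i (Suc j) \<longrightarrow>
        (\<forall>k<N. vnorm (wt t k) \<le> kappa * sigma * sqrt (10 * m * ln (8 * N * T / delta)))"
    and E_Theta: "\<forall>i\<in>{1..ne}. \<forall>j\<in>{1..p}.
        mtrace ((Theta j - Thhat j i) * V j i * transpose_mat (Theta j - Thhat j i))
          \<le> 4 * sigma\<^sup>2 * n * ln (8 * n * p * det (V j i)
                 / (delta * det (lambda \<cdot>\<^sub>m 1\<^sub>m (n + mS mi (G j)))))
             + 2 * lambda * (fro (Theta j))\<^sup>2"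
    and E_z: "\<forall>i\<in>{1..ne}. \<forall>j\<in>{1..p}.
        loewner_ge (n + mS mi (G j)) (V j i - lambda \<cdot>\<^sub>m 1\<^sub>m (n + mS mi (G j)))
          (((real N - 1) * tau1 * i * sigma\<^sup>2 / 80) \<cdot>\<^sub>m 1\<^sub>m (n + mS mi (G j)))"
  shows "\<forall>i\<in>{1..ne}. \<forall>j\<in>{1..p}. opnorm (Thhat j i - Theta j) \<le> sqrt (eps0\<^sup>2 / i)"
proof -
  have n2: "n \<ge> 2" using ass2 by linarith
  have L0pos: "ln (8 * N * T / delta) > 0"
  proof -
    have "Suc 0 \<le> N * T" using N_ge T_pos by (simp add: one_le_mult_iff)
    hence "real N * real T \<ge> 1" by (metis of_nat_1 of_nat_le_iff of_nat_mult One_nat_def)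
    hence "8 * real N * real T > 1" by linarith
    hence "8 * real N * real T / delta > 1" using delta by (simp add: less_divide_eq)
    thus ?thesis by simp
  qed
  show ?thesis
  proof (cases "eps0 = 0")
    case True
    hence "tau1 = 0" unfolding tau1_def by simp
    hence "ne = 0" unfolding ne_def by simp
    thus ?thesis by simp
  next
    case eps: False
    show ?thesis
    proof (intro ballI)
      fix i j assume i: "i \<in> {1..ne}" and j: "j \<in> {1..p}"
      let ?BS = "BS mi B (G j)"
      let ?mj = "mS mi (G j)"
      let ?d = "n + mS mi (G j)"
      let ?L0 = "ln (8 * N * T / delta)"
      have Gsub: "G j \<subseteq> {1..q}" using ass4_part j by blast
      have BSc: "?BS \<in> carrier_mat n ?mj" by (rule BS_carrier[OF B_dim m_def Gsub])
      have opBS: "opnorm ?BS \<le> vartheta" using opnorm_BS[OF B_dim m_def Gsub] vartheta_def by simp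
      have KGc: "KG j \<in> carrier_mat ?mj n" and pw: "\<forall>k. opnorm ((A + ?BS * KG j) ^\<^sub>m k) \<le> zeta0 * eta0 ^ k"
        using ass4_K j by auto
      have kap1: "kappa \<ge> 1" unfolding kappa_def by simp
      have opKG: "opnorm (KG j) \<le> kappa"
      proof -
        have eqs: "{opnorm (KG j) | j. j \<in> {1..p}} = (\<lambda>j. opnorm (KG j)) ` {1..p}" by auto
        have "opnorm (KG j) \<le> Max {opnorm (KG j) | j. j \<in> {1..p}}" unfolding eqs using j by simp
        thus ?thesis unfolding kappa_def by simp
      qed
      have th0: "vartheta \<ge> 0" unfolding vartheta_def using opnorm_nonneg[of A] by simp
      have ne1: "ne \<ge> 1" using i by simp
      have neT: "ne * (p * tau1 + tau2) = T"
      proof -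
        have "ne * tau2 = T - ne * tau1 * p" unfolding tau2_def using tau2_int by simp
        thus ?thesis using tau2_int by (simp add: algebra_simps)
      qed
      have Tsucc: "Tij l (Suc j) = Tij l j + tau1" for l using Tij_def j by (cases j) (auto simp: algebra_simps)
      have inT: "t \<in> {1..T}" if l: "l \<in> {1..i}" and t: "Tij l j \<le> t" "t < Tij l (Suc j)" for l t
      proof -
        define P where "P = p * tau1 + tau2"
        have a: "t < 1 + (l - 1) * P + j * tau1" using t Tij_def unfolding P_def by simp
        have b: "(l - 1) * P \<le> (ne - 1) * P" using l i by (intro mult_le_mono1) auto
        have c: "j * tau1 \<le> p * tau1" using j by simp
        have d: "p * tau1 \<le> P" unfolding P_def by simp
        have e: "(ne - 1) * P + P = T" using neT ne1 unfolding P_def[symmetric] by (cases ne) (auto simp: algebra_simps)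
        have f: "Tij l j \<ge> 1" using Tij_def by simp
        show ?thesis unfolding atLeastAtMost_iff using a b c d e f t by linarith
      qed
      have zr: "(vnorm (z t k))^2 \<le> zb \<and> z t k \<in> carrier_vec ?d"
        if l: "l \<in> {1..i}" and t: "Tij l j \<le> t" "t < Tij l (Suc j)" and k: "k < N" for l t k
      proof -
        have l': "l \<in> {1..ne}" using l i by auto
        have tT: "t \<in> {1..T}" using inT[OF l t] .
        have A1: "S t = G j \<and> (\<forall>k<N. wt t k \<in> carrier_vec ?mj \<and> u t k = KG j *\<^sub>v x t k + wt t k)"
          using est[rule_format, of l j t] l' j t by blast
        have A2: "\<forall>k<N. vnorm (wt t k) \<le> kappa * sigma * sqrt (10 * m * ?L0)"
          using E_wt[rule_format, of l j t] l' j t by blast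
        have dyn': "\<forall>k<N. x t (Suc k) = A *\<^sub>v x t k + ?BS *\<^sub>v u t k + w t k" using dyn tT A1 by simp
        have R: "(vnorm (x t k @\<^sub>v u t k))^2 \<le> zb" "x t k \<in> carrier_vec n"
          by (rule round_z_bound[OF A_dim BSc KGc pw _ _ _ opBS opKG kap1 _ _ _ _ dyn' _ A2 L0pos sigma_pos zb_def k];
              use zeta0_eta0 x0 tT w_dim A1 E_w in auto)+
        have "u t k \<in> carrier_vec (mS mi (S t))" using u_dim tT k by blast
        hence "u t k \<in> carrier_vec ?mj" using A1 by simp
        thus ?thesis using R z_def by simp
      qed
      have Vc: "V j i = mat ?d ?d (\<lambda>(a,b). (if a = b then lambda else 0) +
           (\<Sum>l\<in>{1..i}. \<Sum>t\<in>{Tij l j..<Tij l (Suc j)}. \<Sum>k<N. z t k $ a * z t k $ b))"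
        using V_def by blast
      have zc: "\<forall>l\<in>{1..i}. \<forall>t\<in>{Tij l j..<Tij l (Suc j)}. \<forall>k\<in>{..<N}. z t k \<in> carrier_vec ?d"
        using zr by auto
      have qf: "y \<bullet> (V j i *\<^sub>v y) = lambda * (y \<bullet> y) +
          (\<Sum>l\<in>{1..i}. \<Sum>t\<in>{Tij l j..<Tij l (Suc j)}. \<Sum>k<N. (z t k \<bullet> y)^2)"
        if y: "y \<in> carrier_vec ?d" for y
        by (rule qf_V[OF Vc zc y])
      have Vcar: "V j i \<in> carrier_mat ?d ?d" using Vc by simp
      have Vsym: "\<forall>a<?d. \<forall>b<?d. V j i $$ (a,b) = V j i $$ (b,a)" using Vc by (simp add: mult.commute)
      define X where "X = (\<Sum>l\<in>{1..i}. \<Sum>t\<in>{Tij l j..<Tij l (Suc j)}. \<Sum>k<N. (vnorm (z t k))^2)"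
      have Vup: "\<forall>y\<in>carrier_vec ?d. y \<bullet> (V j i *\<^sub>v y) \<le> (lambda + X) * (y \<bullet> y)"
      proof
        fix y :: "real vec" assume y: "y \<in> carrier_vec ?d"
        have "(\<Sum>l\<in>{1..i}. \<Sum>t\<in>{Tij l j..<Tij l (Suc j)}. \<Sum>k<N. (z t k \<bullet> y)^2)
            \<le> (\<Sum>l\<in>{1..i}. \<Sum>t\<in>{Tij l j..<Tij l (Suc j)}. \<Sum>k<N. (vnorm (z t k))^2 * (y \<bullet> y))"
        proof (intro sum_mono)
          fix l t k assume "l \<in> {1..i}" "t \<in> {Tij l j..<Tij l (Suc j)}" "k \<in> {..<N}"
          hence "z t k \<in> carrier_vec ?d" using zc by blast
          hence "(z t k \<bullet> y)^2 \<le> (z t k \<bullet> z t k) * (y \<bullet> y)" using y by (intro cs_vec) auto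
          thus "(z t k \<bullet> y)^2 \<le> (vnorm (z t k))^2 * (y \<bullet> y)" by (simp add: vnorm_sq)
        qed
        also have "\<dots> = X * (y \<bullet> y)" unfolding X_def by (simp add: sum_distrib_right)
        finally show "y \<bullet> (V j i *\<^sub>v y) \<le> (lambda + X) * (y \<bullet> y)" using qf[OF y] by (simp add: distrib_right)
      qed
      have Vlow: "\<forall>y\<in>carrier_vec ?d. lambda * (y \<bullet> y) \<le> y \<bullet> (V j i *\<^sub>v y)"
      proof
        fix y :: "real vec" assume y: "y \<in> carrier_vec ?d"
        have "0 \<le> (\<Sum>l\<in>{1..i}. \<Sum>t\<in>{Tij l j..<Tij l (Suc j)}. \<Sum>k<N. (z t k \<bullet> y)^2)"
          by (intro ordered_comm_monoid_add_class.sum_nonneg) simp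
        thus "lambda * (y \<bullet> y) \<le> y \<bullet> (V j i *\<^sub>v y)" using qf[OF y] by simp
      qed
      have detb: "lambda ^ ?d \<le> det (V j i) \<and> det (V j i) \<le> (lambda + X) ^ ?d"
        by (rule det_bound[OF Vcar Vsym lambda_pos Vlow Vup])
      have zb0: "zb \<ge> 0" unfolding zb_def using L0pos
        by (intro mult_nonneg_nonneg divide_nonneg_nonneg) auto
      have X0: "X \<ge> 0" unfolding X_def by (intro ordered_comm_monoid_add_class.sum_nonneg) simp
      have XN: "X \<le> real i * real tau1 * real N * zb"
      proof -
        have "X \<le> (\<Sum>l\<in>{1..i}. \<Sum>t\<in>{Tij l j..<Tij l (Suc j)}. \<Sum>k<N. zb)"
          unfolding X_def using zr by (intro sum_mono) auto
        also have "\<dots> = real i * real tau1 * real N * zb" by (simp add: Tsucc)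
        finally show ?thesis .
      qed
      have itp: "real i * real tau1 * real p \<le> real T"
      proof -
        have "i * tau1 * p \<le> ne * tau1 * p" using i by simp
        hence "i * tau1 * p \<le> T" using tau2_int by linarith
        thus ?thesis by (metis of_nat_le_iff of_nat_mult)
      qed
      have p1: "real p \<ge> 1" using ass4_part by simp
      have XT: "X \<le> real N * real T * zb / real p"
      proof -
        have "X * real p \<le> real i * real tau1 * real N * zb * real p" using XN p1 by (intro mult_right_mono) auto
        also have "\<dots> = (real i * real tau1 * real p) * (real N * zb)" by (simp add: ac_simps)
        also have "\<dots> \<le> real T * (real N * zb)" using itp zb0 by (intro mult_right_mono) auto
        finally show ?thesis using p1 by (simp add: field_simps)
      qed
      have mjm: "?mj \<le> m" unfolding mS_def m_def using Gsub by (intro sum_mono2) auto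
      have Ez: "\<forall>y\<in>carrier_vec ?d. (lambda + (real N - 1) * tau1 * i * sigma\<^sup>2 / 80) * (y \<bullet> y) \<le> y \<bullet> (V j i *\<^sub>v y)"
      proof
        fix y :: "real vec" assume y: "y \<in> carrier_vec ?d"
        have "loewner_ge ?d (V j i - lambda \<cdot>\<^sub>m 1\<^sub>m ?d) (((real N - 1) * tau1 * i * sigma\<^sup>2 / 80) \<cdot>\<^sub>m 1\<^sub>m ?d)"
          using E_z i j by blast
        hence "0 \<le> y \<bullet> ((V j i - lambda \<cdot>\<^sub>m 1\<^sub>m ?d - ((real N - 1) * tau1 * i * sigma\<^sup>2 / 80) \<cdot>\<^sub>m 1\<^sub>m ?d) *\<^sub>v y)"
          using y unfolding loewner_ge_def by blast
        thus "(lambda + (real N - 1) * tau1 * i * sigma\<^sup>2 / 80) * (y \<bullet> y) \<le> y \<bullet> (V j i *\<^sub>v y)"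
          unfolding qf_shift[OF Vcar y] by simp
      qed
      have Thc: "Theta j \<in> carrier_mat n ?d" using Theta_def A_dim BSc unfolding hcat_def by auto
      have Thhc: "Thhat j i \<in> carrier_mat n ?d" using Thhat_min i j by blast
      have Dlc: "Theta j - Thhat j i \<in> carrier_mat n ?d" using Thc Thhc unfolding carrier_mat_def by auto
      have trl: "(lambda + (real N - 1) * tau1 * i * sigma\<^sup>2 / 80) * (fro (Theta j - Thhat j i))^2
          \<le> mtrace ((Theta j - Thhat j i) * V j i * transpose_mat (Theta j - Thhat j i))"
        by (rule trace_lower[OF Dlc Vcar Ez])
      have ET: "mtrace ((Theta j - Thhat j i) * V j i * transpose_mat (Theta j - Thhat j i))
          \<le> 4 * sigma\<^sup>2 * n * ln (8 * n * p * det (V j i) / (delta * det (lambda \<cdot>\<^sub>m 1\<^sub>m ?d)))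
             + 2 * lambda * (fro (Theta j))\<^sup>2"
        using E_Theta i j by blast
      have froT: "(fro (Theta j))^2 \<le> 2 * n * vartheta^2"
      proof -
        have "(fro (Theta j))^2 = (fro A)^2 + (fro ?BS)^2" unfolding Theta_def[rule_format]
          using A_dim BSc by (intro fro_hcat) auto
        moreover have "(fro A)^2 \<le> n * (opnorm A)^2" using fro_le_opnorm[of A] A_dim by simp
        moreover have "(fro ?BS)^2 \<le> n * (opnorm ?BS)^2" using fro_le_opnorm[of ?BS] BSc by simp
        moreover have "(opnorm A)^2 \<le> vartheta^2" unfolding vartheta_def using opnorm_nonneg[of A]
          by (intro power_mono) auto
        moreover have "(opnorm ?BS)^2 \<le> vartheta^2" using opBS opnorm_nonneg[of ?BS] by (intro power_mono) auto
        ultimately have "(fro (Theta j))^2 \<le> n * vartheta^2 + n * vartheta^2"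
          by (smt (verit) mult_left_mono of_nat_0_le_iff)
        thus ?thesis by simp
      qed
      have detI: "det (lambda \<cdot>\<^sub>m 1\<^sub>m ?d) = lambda ^ ?d" by simp
      have Dpos: "det (V j i) > 0" using detb lambda_pos by (meson less_le_trans zero_less_power)
      define Y where "Y = real N * real T * zb / lambda"
      define LT where "LT = ln (8 * real n / delta * (real p + Y))"
      define LTH where "LTH = ln (8 * real n / delta * real p * det (V j i) / lambda ^ ?d)"
      have c01: "8 * real n / delta \<ge> 1" using delta n2 by (simp add: le_divide_eq)
      have Y0: "Y \<ge> 0" unfolding Y_def using zb0 lambda_pos by simp
      have Lth: "LTH \<le> real (n + m) * LT"
      proof -
        have XY: "X / lambda \<le> Y / p" unfolding Y_def using XT lambda_pos p1 by (simp add: field_simps)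
        show ?thesis unfolding LTH_def LT_def
          by (rule ln_arith[OF lambda_pos X0 XY p1 Y0 Dpos conjunct2[OF detb] _ _ c01]) (use n2 mjm in auto)
      qed
      have Ltpos: "LT > 0"
      proof -
        have "8 * real n / delta > 1" using delta n2 by (simp add: less_divide_eq)
        moreover have "real p + Y \<ge> 1" using p1 Y0 by simp
        moreover have "8 * real n / delta * 1 \<le> 8 * real n / delta * (real p + Y)"
          using \<open>real p + Y \<ge> 1\<close> delta by (intro mult_left_mono) auto
        ultimately have "8 * real n / delta * (real p + Y) > 1" by linarith
        thus ?thesis unfolding LT_def by simp
      qed
      have opf: "opnorm (Thhat j i - Theta j) \<le> fro (Theta j - Thhat j i)"
        using opnorm_le_fro[of "Thhat j i - Theta j"] fro_uminus[OF Thhc Thc] by simp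
      have op0: "opnorm (Thhat j i - Theta j) \<ge> 0" by (rule opnorm_nonneg)
      let ?c = "(real N - 1) * real tau1 * real i * sigma^2 / 80"
      have c0: "?c \<ge> 0" using N_ge by simp
      have ET': "mtrace ((Theta j - Thhat j i) * V j i * transpose_mat (Theta j - Thhat j i))
          \<le> 4 * sigma^2 * real n * LTH + 2 * lambda * (fro (Theta j))^2"
      proof -
        have "8 * n * p * det (V j i) / (delta * det (lambda \<cdot>\<^sub>m 1\<^sub>m ?d))
            = 8 * real n / delta * real p * det (V j i) / lambda ^ ?d" unfolding detI using delta by simp
        thus ?thesis using ET unfolding LTH_def by simp
      qed
      have trl': "(lambda + ?c) * (fro (Theta j - Thhat j i))^2
          \<le> mtrace ((Theta j - Thhat j i) * V j i * transpose_mat (Theta j - Thhat j i))"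
        using trl by simp
      have "?c * (opnorm (Thhat j i - Theta j))^2 \<le> ?c * (fro (Theta j - Thhat j i))^2"
        using opf op0 c0 by (intro mult_left_mono power_mono) auto
      also have "\<dots> \<le> (lambda + ?c) * (fro (Theta j - Thhat j i))^2" using lambda_pos by (intro mult_right_mono) auto
      also have "\<dots> \<le> 4 * sigma^2 * real n * LTH + 2 * lambda * (fro (Theta j))^2" using trl' ET' by linarith
      finally have tr: "?c * (opnorm (Thhat j i - Theta j))^2 \<le> 4 * sigma^2 * real n * LTH + 2 * lambda * (fro (Theta j))^2" .
      have froT': "(fro (Theta j))^2 \<le> 2 * real n * vartheta^2" using froT by simp
      have t0: "real tau1 \<ge> 160 * n * (lambda * vartheta\<^sup>2 * n / sigma\<^sup>2
        + 2 * (n + m) * ln (8 * n / delta * (p + N * T * zb / lambda)))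
        / ((real N - 1) * eps0\<^sup>2)" unfolding tau1_def by (rule real_nat_ceiling_ge)
      have t1: "real tau1 \<ge> 160 * real n * (lambda * vartheta^2 * real n / sigma^2 + 2 * real (n + m) * LT)
          / ((real N - 1) * eps0^2)" using t0 unfolding LT_def Y_def by simp
      show "opnorm (Thhat j i - Theta j) \<le> sqrt (eps0\<^sup>2 / i)"
        using N_ge i sigma_pos n2 eps by (intro final_arith[OF _ _ _ lambda_pos op0 tr froT' Lth _ _ Ltpos _ t1]) auto
    qed
  qed
qed

theorem lemma9:
  fixes n m q H N T p ell :: nat
    and mi :: "nat \<Rightarrow> nat"
    and A B :: "real mat"
    and Q Qf R :: "nat \<Rightarrow> real mat"
    and nu sigma lambda delta zeta0 eta0 :: real
    and zeta eta :: "nat set \<Rightarrow> real"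
    and G :: "nat \<Rightarrow> nat set" and KG :: "nat \<Rightarrow> real mat"
    and eps0 beta vartheta kappa sigQ sigR zb :: real
    and tau1 ne tau2 :: nat and Tij :: "nat \<Rightarrow> nat \<Rightarrow> nat"
    and S :: "nat \<Rightarrow> nat set"
    and x u w wt :: "nat \<Rightarrow> nat \<Rightarrow> real vec"
    and Thhat :: "nat \<Rightarrow> nat \<Rightarrow> real mat"
    and Theta :: "nat \<Rightarrow> real mat"
    and z :: "nat \<Rightarrow> nat \<Rightarrow> real vec"
    and V :: "nat \<Rightarrow> nat \<Rightarrow> real mat"
    and obj :: "nat \<Rightarrow> nat \<Rightarrow> real mat \<Rightarrow> real"
  assumes
    \<comment> \<open>setting\<close>
    m_def: "m = (\<Sum>i\<in>{1..q}. mi i)"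
    and A_dim: "A \<in> carrier_mat n n" and B_dim: "B \<in> carrier_mat n m"
    and H_pos: "H \<ge> 1" and N_ge: "N \<ge> 2" and T_pos: "T \<ge> 1"
    and Q_psd: "\<forall>t\<in>{1..T}. psd n (Q t) \<and> psd n (Qf t)"
    and R_pd: "\<forall>t\<in>{1..T}. pd m (R t)"
    and sigQ_def: "sigQ = max (Max {opnorm (Q t) | t. t \<in> {1..T}}) (Max {opnorm (Qf t) | t. t \<in> {1..T}})"
    and sigR_def: "sigR = Max {opnorm (R t) | t. t \<in> {1..T}}"
    and vartheta_def: "vartheta = max (opnorm A) (opnorm B)"
    and zeta_eta: "\<forall>S'. S' \<subseteq> {1..q} \<and> card S' = H \<longrightarrow>
         zeta S' \<ge> 1 \<and> 0 < eta S' \<and> eta S' < 1 \<and>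
         (\<forall>t\<in>{1..T}. \<forall>k1 k2. k1 \<le> k2 \<and> k2 \<le> N \<longrightarrow>
            opnorm (psi n (\<lambda>k. A + BS mi B S' * Kk mi A B S' (Q t) (Qf t) (R t) N k) k1 k2)
              \<le> zeta S' * eta S' ^ (k2 - k1))"
    and beta_def: "beta = max 1 (eps0 + opnorm A)"
    and eps0_def: "eps0 = Min {(1 - eta S') / (6 * opnorm (BS mi B S') * zeta S')
          / (1 + GammaS mi A B Q Qf R N T S') ^ 3
          / (20 * (1 + GammaS mi A B Q Qf R N T S') ^ 9 * sigR) ^ (ell - 1)
          / (32 * real ell powr (5/2) * beta ^ (2 * (ell - 1)) * (1 + 1 / nu)
               * (1 + GammaS mi A B Q Qf R N T S') ^ 3 * max sigQ sigR)
        | S'. S' \<subseteq> {1..q} \<and> card S' = H}"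
    \<comment> \<open>Assumption 1\<close>
    and ass1: "\<forall>t\<in>{1..T}. pd n (Qf t) \<and> svmin (Q t) \<ge> 1 \<and> svmin (R t) \<ge> 1"
    \<comment> \<open>Assumption 2\<close>
    and ass2: "1 \<le> ell \<and> ell \<le> n - 1 \<and> nu > 0 \<and>
       (\<forall>S'. S' \<subseteq> {1..q} \<and> card S' = H \<longrightarrow> svmin (ctrb A (BS mi B S') ell) \<ge> nu)"
    \<comment> \<open>Assumption 4\<close>
    and ass4_part: "p \<ge> 1 \<and> (\<Union>j\<in>{1..p}. G j) = {1..q} \<and>
       (\<forall>j\<in>{1..p}. G j \<noteq> {} \<and> card (G j) \<le> H) \<and>
       (\<forall>j\<in>{1..p}. \<forall>j'\<in>{1..p}. j \<noteq> j' \<longrightarrow> G j \<inter> G j' = {})"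
    and ass4_K: "\<forall>j\<in>{1..p}. KG j \<in> carrier_mat (mS mi (G j)) n \<and>
       (\<forall>k. opnorm ((A + BS mi B (G j) * KG j) ^\<^sub>m k) \<le> zeta0 * eta0 ^ k)"
    and zeta0_eta0: "zeta0 \<ge> 1 \<and> 0 < eta0 \<and> eta0 < 1"
    and kappa_def: "kappa = max (Max {opnorm (KG j) | j. j \<in> {1..p}}) 1"
    \<comment> \<open>algorithm parameters\<close>
    and lambda_pos: "lambda > 0" and sigma_pos: "sigma > 0"
    and delta: "0 < delta \<and> delta < 1"
    and zb_def: "zb = 20 * zeta0\<^sup>2 * (1 + kappa)\<^sup>2 * sigma\<^sup>2 / (1 - eta0)\<^sup>2
        * (2 * (vartheta\<^sup>2 + 1) * kappa\<^sup>2 * m + n) * ln (8 * N * T / delta)"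
    and tau1_def: "tau1 = nat \<lceil>160 * n * (lambda * vartheta\<^sup>2 * n / sigma\<^sup>2
        + 2 * (n + m) * ln (8 * n / delta * (p + N * T * zb / lambda)))
        / ((real N - 1) * eps0\<^sup>2)\<rceil>"
    and ne_def: "ne = nat \<lceil>sqrt T / (tau1 * p)\<rceil>"
    and tau2_int: "ne * tau1 * p \<le> T \<and> ne dvd (T - ne * tau1 * p)"
    and tau2_def: "tau2 = (T - ne * tau1 * p) div ne"
    and Tij_def: "\<forall>i j. Tij i j = 1 + (i - 1) * (p * tau1 + tau2) + (j - 1) * tau1"
    \<comment> \<open>closed-loop system (one realisation of the noise)\<close>
    and S_sub: "\<forall>t\<in>{1..T}. S t \<subseteq> {1..q}"
    and x0: "\<forall>t\<in>{1..T}. x t 0 = 0\<^sub>v n"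
    and w_dim: "\<forall>t\<in>{1..T}. \<forall>k<N. w t k \<in> carrier_vec n"
    and u_dim: "\<forall>t\<in>{1..T}. \<forall>k<N. u t k \<in> carrier_vec (mS mi (S t))"
    and dyn: "\<forall>t\<in>{1..T}. \<forall>k<N.
        x t (Suc k) = A *\<^sub>v x t k + BS mi B (S t) *\<^sub>v u t k + w t k"
    \<comment> \<open>estimation rounds\<close>
    and est: "\<forall>i\<in>{1..ne}. \<forall>j\<in>{1..p}. \<forall>t. Tij i j \<le> t \<and> t < Tij i (Suc j) \<longrightarrow>
        S t = G j \<and> (\<forall>k<N. wt t k \<in> carrier_vec (mS mi (G j)) \<and>
                           u t k = KG j *\<^sub>v x t k + wt t k)"
    \<comment> \<open>remaining rounds: an H-subset of actuators (chosen by Exp3.S)\<close>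
    and nonest: "\<forall>t\<in>{1..T}. (\<not> (\<exists>i\<in>{1..ne}. \<exists>j\<in>{1..p}. Tij i j \<le> t \<and> t < Tij i (Suc j)))
        \<longrightarrow> card (S t) = H"
    \<comment> \<open>regularised least-squares estimates\<close>
    and z_def: "\<forall>t k. z t k = x t k @\<^sub>v u t k"
    and Theta_def: "\<forall>j. Theta j = hcat A (BS mi B (G j))"
    and obj_def: "\<forall>j i Y. obj j i Y = lambda * (fro Y)\<^sup>2 +
        (\<Sum>l\<in>{1..i}. \<Sum>t\<in>{Tij l j..<Tij l (Suc j)}. \<Sum>k<N.
            (vnorm (x t (Suc k) - Y *\<^sub>v z t k))\<^sup>2)"
    and Thhat_min: "\<forall>i\<in>{1..ne}. \<forall>j\<in>{1..p}.
        Thhat j i \<in> carrier_mat n (n + mS mi (G j)) \<and>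
        (\<forall>Y \<in> carrier_mat n (n + mS mi (G j)). obj j i (Thhat j i) \<le> obj j i Y)"
    and V_def: "\<forall>j i. V j i = mat (n + mS mi (G j)) (n + mS mi (G j))
        (\<lambda>(a,b). (if a = b then lambda else 0) +
           (\<Sum>l\<in>{1..i}. \<Sum>t\<in>{Tij l j..<Tij l (Suc j)}. \<Sum>k<N. z t k $ a * z t k $ b))"
    \<comment> \<open>the event E = E_w \<inter> E_wt \<inter> E_Theta \<inter> E_z\<close>
    and E_w: "\<forall>t\<in>{1..T}. \<forall>k<N. vnorm (w t k) \<le> sigma * sqrt (5 * n * ln (8 * N * T / delta))"
    and E_wt: "\<forall>i\<in>{1..ne}. \<forall>j\<in>{1..p}. \<forall>t. Tij i j \<le> t \<and> t < Tij i (Suc j) \<longrightarrow>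
        (\<forall>k<N. vnorm (wt t k) \<le> kappa * sigma * sqrt (10 * m * ln (8 * N * T / delta)))"
    and E_Theta: "\<forall>i\<in>{1..ne}. \<forall>j\<in>{1..p}.
        mtrace ((Theta j - Thhat j i) * V j i * transpose_mat (Theta j - Thhat j i))
          \<le> 4 * sigma\<^sup>2 * n * ln (8 * n * p * det (V j i)
                 / (delta * det (lambda \<cdot>\<^sub>m 1\<^sub>m (n + mS mi (G j)))))
             + 2 * lambda * (fro (Theta j))\<^sup>2"
    and E_z: "\<forall>i\<in>{1..ne}. \<forall>j\<in>{1..p}.
        loewner_ge (n + mS mi (G j)) (V j i - lambda \<cdot>\<^sub>m 1\<^sub>m (n + mS mi (G j)))
          (((real N - 1) * tau1 * i * sigma\<^sup>2 / 80) \<cdot>\<^sub>m 1\<^sub>m (n + mS mi (G j)))"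
  shows "\<forall>i\<in>{1..ne}. \<forall>j\<in>{1..p}. opnorm (Thhat j i - Theta j) \<le> sqrt (eps0\<^sup>2 / i)"
  by (rule lemma9_core[OF m_def A_dim B_dim N_ge T_pos vartheta_def ass2 ass4_part ass4_K zeta0_eta0 kappa_def lambda_pos sigma_pos delta zb_def tau1_def ne_def tau2_int tau2_def Tij_def x0 w_dim u_dim dyn est z_def Theta_def Thhat_min V_def E_w E_wt E_Theta E_z])

end
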